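(* Let $p,q\ge0$, $n=p+q\ge1$, $N=2^{\lfloor (n+1)/2\rfloor}$, and let $M\in\mathcal{G}^{\mathbb{C}}_{p,q}$ be normal, i.e. $M^\dagger M=MM^\dagger$. Then ${\rm rank}(M)=N$ if $C_{(N)}(M)\ne0$; for $k\in\{2,\dots,N-1\}$, ${\rm rank}(M)=k$ if $C_{(j)}(M)=0$ for all $j=k+1,\dots,N$ and $C_{(k)}(M)\ne0$; ${\rm rank}(M)=1$ if $C_{(j)}(M)=0$ for all $j=2,\dots,N$ and $M\neq0$; ${\rm rank}(M)=0$ if $M=0$.
   Context: Let $\mathcal{G}_{p,q}$ be the real Clifford algebra with identity $e$ and generators $e_1,\dots,e_n$ satisfying $e_ae_b+e_be_a=2\eta_{ab}e$, $\eta={\rm diag}(1,\dots,1,-1,\dots,-1)$ ($p$ ones, $q$ minus ones), basis elements $e_A=e_{a_1}\cdots e_{a_k}$ for $a_1<\dots<a_k$, and $\mathcal{G}^{\mathbb{C}}_{p,q}=\mathbb{C}\otimes\mathcal{G}_{p,q}$ with elements $M=\sum_A m_Ae_A$, $m_A\in\mathbb{C}$. Hermitian conjugation: $M^\dagger=\sum_A\overline{m_A}(e_A)^{-1}$. Let $\langle M\rangle_0$ denote the coefficient of $e$. Let $\beta$ be an algebra isomorphism from $\mathcal{G}^{\mathbb{C}}_{p,q}$ onto ${\rm Mat}(N,\mathbb{C})$ if $n$ is even, and onto block-diagonal matrices ${\rm diag}(X,Y)$, $X,Y\in{\rm Mat}(N/2,\mathbb{C})$, if $n$ is odd. The rank is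 ${\rm rank}(M):={\rm rank}(\beta(M))$, independent of $\beta$. The characteristic polynomial coefficients $C_{(k)}(M)$ are defined by $\det(\lambda I_N-\beta(M))=\lambda^N-C_{(1)}(M)\lambda^{N-1}-\cdots-C_{(N)}(M)$ (independent of $\beta$); equivalently by the recursion $M_{(1)}=M$, $C_{(k)}=\frac{N}{k}\langle M_{(k)}\rangle_0$, $M_{(k+1)}=M(M_{(k)}-C_{(k)})$, $k=1,\dots,N$. *)

theory Defs
  imports Complex_Main "Jordan_Normal_Form.DL_Rank"
begin

text \<open>An element M = sum_A m_A e_A is represented by its coefficient function
  M :: nat set => complex, where the multi-index A ranges over subsets of the
  generator indices {1..n}; coefficients outside Pow {1..n} must vanish.\<close>

type_synonym cl = "nat set \<Rightarrow> complex"

definition cl_carrier :: "nat \<Rightarrow> nat \<Rightarrow> cl set" where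
  "cl_carrier p q = {X. \<forall>A. \<not> A \<subseteq> {1..p+q} \<longrightarrow> X A = 0}"

definition cl_eta :: "nat \<Rightarrow> nat \<Rightarrow> complex" where
  "cl_eta p a = (if a \<le> p then 1 else -1)"

text \<open>e_A e_B = blade_coeff A B * e_{A symmetric-difference B}
  (reorder generators, then use e_a e_a = eta_a e).\<close>
definition blade_coeff :: "nat \<Rightarrow> nat set \<Rightarrow> nat set \<Rightarrow> complex" where
  "blade_coeff p A B =
     (-1) ^ card {(a, b). a \<in> A \<and> b \<in> B \<and> b < a} * (\<Prod>a\<in>A \<inter> B. cl_eta p a)"

definition cl_mult :: "nat \<Rightarrow> nat \<Rightarrow> cl \<Rightarrow> cl \<Rightarrow> cl" where
  "cl_mult p q X Y = (\<lambda>C. \<Sum>A\<in>Pow {1..p+q}. \<Sum>B\<in>Pow {1..p+q}.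
      (if (A - B) \<union> (B - A) = C then X A * Y B * blade_coeff p A B else 0))"

definition cl_one :: cl where
  "cl_one = (\<lambda>A. if A = {} then 1 else 0)"

definition cl_scalar :: "cl \<Rightarrow> complex" where
  "cl_scalar X = X {}"

text \<open>Hermitian conjugation M^dagger = sum_A conj(m_A) (e_A)^{-1}.
  Since e_A e_A = blade_coeff A A e with blade_coeff A A = +-1,
  (e_A)^{-1} = blade_coeff A A e_A.\<close>
definition cl_dagger :: "nat \<Rightarrow> cl \<Rightarrow> cl" where
  "cl_dagger p X = (\<lambda>A. cnj (X A) * blade_coeff p A A)"

definition cl_normal :: "nat \<Rightarrow> nat \<Rightarrow> cl \<Rightarrow> bool" where
  "cl_normal p q X \<longleftrightarrow> cl_mult p q (cl_dagger p X) X = cl_mult p q X (cl_dagger p X)"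

definition cl_N :: "nat \<Rightarrow> nat \<Rightarrow> nat" where
  "cl_N p q = 2 ^ ((p + q + 1) div 2)"

text \<open>Recursion: M_(1) = M, C_(k) = N/k <M_(k)>_0, M_(k+1) = M (M_(k) - C_(k) e).
  cl_Mseq p q M k is M_(k+1).\<close>
primrec cl_Mseq :: "nat \<Rightarrow> nat \<Rightarrow> cl \<Rightarrow> nat \<Rightarrow> cl" where
  "cl_Mseq p q M 0 = M"
| "cl_Mseq p q M (Suc k) =
     cl_mult p q M (\<lambda>A. cl_Mseq p q M k A
        - (of_nat (cl_N p q) / of_nat (Suc k) * cl_scalar (cl_Mseq p q M k)) * cl_one A)"

definition cl_C :: "nat \<Rightarrow> nat \<Rightarrow> cl \<Rightarrow> nat \<Rightarrow> complex" where
  "cl_C p q M k = of_nat (cl_N p q) / of_nat k * cl_scalar (cl_Mseq p q M (k - 1))"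

text \<open>Target of beta: all N x N complex matrices if n even; block diagonal
  matrices diag(X,Y), X,Y of size N/2, if n odd.\<close>
definition cl_target :: "nat \<Rightarrow> nat \<Rightarrow> complex mat set" where
  "cl_target p q =
     (if even (p + q) then carrier_mat (cl_N p q) (cl_N p q)
      else {A \<in> carrier_mat (cl_N p q) (cl_N p q).
              \<forall>i<cl_N p q. \<forall>j<cl_N p q.
                (i < cl_N p q div 2) \<noteq> (j < cl_N p q div 2) \<longrightarrow> A $$ (i, j) = 0})"

definition cl_iso :: "nat \<Rightarrow> nat \<Rightarrow> (cl \<Rightarrow> complex mat) \<Rightarrow> bool" where
  "cl_iso p q \<beta> \<longleftrightarrow>
     bij_betw \<beta> (cl_carrier p q) (cl_target p q) \<and>
     (\<forall>X\<in>cl_carrier p q. \<forall>Y\<in>cl_carrier p q. \<beta> (\<lambda>A. X A + Y A) = \<beta> X + \<beta> Y) \<and>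
     (\<forall>c. \<forall>X\<in>cl_carrier p q. \<beta> (\<lambda>A. c * X A) = c \<cdot>\<^sub>m \<beta> X) \<and>
     (\<forall>X\<in>cl_carrier p q. \<forall>Y\<in>cl_carrier p q. \<beta> (cl_mult p q X Y) = \<beta> X * \<beta> Y) \<and>
     \<beta> cl_one = 1\<^sub>m (cl_N p q)"

definition cl_rank :: "nat \<Rightarrow> nat \<Rightarrow> (cl \<Rightarrow> complex mat) \<Rightarrow> cl \<Rightarrow> nat" where
  "cl_rank p q \<beta> M = vec_space.rank (cl_N p q) (\<beta> M)"

end

theory Submission
  imports Defs "Jordan_Normal_Form.Jordan_Normal_Form_Existence" "Jordan_Normal_Form.Jordan_Normal_Form_Uniqueness"
begin

lemma rank_nullity_mat:
  fixes A :: "'a::field mat"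
  assumes A: "A \<in> carrier_mat n n"
  shows "vec_space.rank n A + kernel_dim A = n"
proof -
  let ?V = "module_vec TYPE('a) n"
  let ?T = "\<lambda>v. A *\<^sub>v v"
  interpret V: vec_space "TYPE('a)" n .
  interpret K: kernel n n A by (unfold_locales, rule A)
  interpret LM: linear_map class_ring ?V ?V ?T
  proof (unfold_locales)
    show "?T \<in> LinearCombinations.module_hom class_ring ?V ?V"
      unfolding LinearCombinations.module_hom_def using A
      by (auto simp: module_vec_def mult_add_distrib_mat_vec mult_mat_vec)
  qed
  have fd: "V.fin_dim" by simp
  from LM.rank_nullity[OF fd]
  have rn: "vectorspace.dim class_ring (V.vs LM.imT) + vectorspace.dim class_ring (V.vs LM.kerT) = n"
    using V.dim_is_n by simp
  have ker: "LM.kerT = mat_kernel A"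
    unfolding LM.ker_def mat_kernel_def using A by (auto simp: module_vec_def)
  have cols: "set (cols A) \<subseteq> carrier_vec n" using A by (auto simp: cols_def)
  have im: "LM.imT = V.span (set (cols A))"
  proof -
    have "V.span (set (cols A)) = V.span_list (cols A)"
      using V.span_list_as_span[OF cols] by simp
    also have "\<dots> = {A *\<^sub>v vec n c | c. True}"
    proof -
      have "V.lincomb_list c (cols A) = A *\<^sub>v vec n c" for c
      proof -
        have "V.lincomb_list c (cols A) = mat_of_cols n (cols A) *\<^sub>v vec (length (cols A)) c"
          by (rule V.lincomb_list_as_mat_mult, insert cols, auto)
        then show ?thesis using A mat_of_cols_cols[of A] by simp
      qed
      then show ?thesis unfolding V.span_list_def by auto
    qed
    also have "\<dots> = ?T ` carrier_vec n"
    proof (intro equalityI subsetI)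
      fix x assume "x \<in> {A *\<^sub>v vec n c | c. True}"
      then show "x \<in> ?T ` carrier_vec n" by auto
    next
      fix x assume "x \<in> ?T ` carrier_vec n"
      then obtain v :: "'a vec" where v: "v \<in> carrier_vec n" "x = A *\<^sub>v v" by auto
      then have "v = vec n (\<lambda>i. v $ i)" by auto
      then have "x = A *\<^sub>v vec n (\<lambda>i. v $ i)" using v by metis
      then show "x \<in> {A *\<^sub>v vec n c | c. True}" by blast
    qed
    finally show ?thesis unfolding LM.im_def by (simp add: module_vec_def)
  qed
  have "vec_space.rank n A = vectorspace.dim class_ring (V.vs LM.imT)"
    unfolding V.rank_def im by simp
  moreover have "kernel_dim A = vectorspace.dim class_ring (V.vs LM.kerT)"
    unfolding ker using K.kernel_dim by simp
  ultimately show ?thesis using rn by simp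
qed

definition esym :: "(nat \<Rightarrow> complex) \<Rightarrow> nat set \<Rightarrow> nat \<Rightarrow> complex" where
  "esym f S k = (\<Sum>T\<in>{T. T \<subseteq> S \<and> card T = k}. \<Prod>t\<in>T. f t)"

lemma esym_fin: "finite S \<Longrightarrow> finite {T. T \<subseteq> S \<and> card T = k}"
  by (rule finite_subset[of _ "Pow S"]) auto

lemma esym0: assumes "finite S" shows "esym f S 0 = 1"
proof -
  have "T = {}" if "T \<subseteq> S" "card T = 0" for T
    using that by (meson assms card_0_eq finite_subset)
  then have "{T. T \<subseteq> S \<and> card T = 0} = {{}}" by auto
  then show ?thesis unfolding esym_def by simp
qed

lemma esym_Suc: assumes S: "finite S" and i: "i \<in> S"
  shows "esym f S (Suc k) = esym f (S - {i}) (Suc k) + f i * esym f (S - {i}) k"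
proof -
  let ?A = "{T. T \<subseteq> S - {i} \<and> card T = Suc k}"
  let ?B = "{U. U \<subseteq> S - {i} \<and> card U = k}"
  have split: "{T. T \<subseteq> S \<and> card T = Suc k} = ?A \<union> insert i ` ?B"
  proof (intro equalityI subsetI)
    fix T assume T: "T \<in> {T. T \<subseteq> S \<and> card T = Suc k}"
    then have fT: "finite T" using S by (auto intro: finite_subset)
    show "T \<in> ?A \<union> insert i ` ?B"
    proof (cases "i \<in> T")
      case True
      then have "T = insert i (T - {i})" by auto
      moreover have "T - {i} \<in> ?B" using T True fT by auto
      ultimately show ?thesis by blast
    next
      case False then show ?thesis using T by auto
    qed
  next
    fix T assume "T \<in> ?A \<union> insert i ` ?B"
    then show "T \<in> {T. T \<subseteq> S \<and> card T = Suc k}"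
    proof
      assume "T \<in> ?A" then show ?thesis by auto
    next
      assume "T \<in> insert i ` ?B"
      then obtain U where U: "U \<in> ?B" "T = insert i U" by auto
      then have fU: "finite U" using S by (auto intro: finite_subset)
      have "i \<notin> U" using U by auto
      then have "card T = Suc k" using U fU by simp
      then show ?thesis using U i by auto
    qed
  qed
  have disj: "?A \<inter> insert i ` ?B = {}" by auto
  have fA: "finite ?A" using esym_fin[of "S - {i}"] S by auto
  have fB: "finite ?B" using esym_fin[of "S - {i}"] S by auto
  have inj: "inj_on (insert i) ?B"
    unfolding inj_on_def by (metis (no_types, lifting) Diff_insert_absorb mem_Collect_eq subset_Diff_insert)
  have "esym f S (Suc k) = (\<Sum>T\<in>?A. \<Prod>t\<in>T. f t) + (\<Sum>T\<in>insert i ` ?B. \<Prod>t\<in>T. f t)"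
    unfolding esym_def split by (rule sum.union_disjoint[OF fA finite_imageI[OF fB] disj])
  also have "(\<Sum>T\<in>insert i ` ?B. \<Prod>t\<in>T. f t) = (\<Sum>U\<in>?B. \<Prod>t\<in>insert i U. f t)"
    by (rule sum.reindex[OF inj, unfolded comp_def])
  also have "\<dots> = (\<Sum>U\<in>?B. f i * (\<Prod>t\<in>U. f t))"
  proof (rule sum.cong[OF refl])
    fix U assume "U \<in> ?B"
    then have "finite U" "i \<notin> U" using S by (auto intro: finite_subset)
    then show "(\<Prod>t\<in>insert i U. f t) = f i * (\<Prod>t\<in>U. f t)" by simp
  qed
  also have "\<dots> = f i * esym f (S - {i}) k" unfolding esym_def by (simp add: sum_distrib_left)
  finally show ?thesis unfolding esym_def by simp
qed

lemma esym_empty_Suc: "esym f {} (Suc k) = 0"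
  unfolding esym_def by auto

lemma esym_sum: assumes "finite S"
  shows "(\<Sum>i\<in>S. f i * esym f (S - {i}) k) = of_nat (Suc k) * esym f S (Suc k)"
  using assms
proof (induction S arbitrary: k rule: finite_induct)
  case empty
  then show ?case by (simp add: esym_empty_Suc)
next
  case (insert a S)
  have E: "esym f (insert a S) (Suc k) = esym f S (Suc k) + f a * esym f S k"
    using esym_Suc[of "insert a S" a f k] insert by simp
  have rem: "insert a S - {i} = insert a (S - {i})" if "i \<in> S" for i
    using that insert by auto
  have "(\<Sum>i\<in>insert a S. f i * esym f (insert a S - {i}) k)
      = f a * esym f S k + (\<Sum>i\<in>S. f i * esym f (insert a (S - {i})) k)"
    using insert by (simp add: rem)
  also have "\<dots> = of_nat (Suc k) * esym f (insert a S) (Suc k)"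
  proof (cases k)
    case 0
    have "(\<Sum>i\<in>S. f i * esym f (insert a (S - {i})) k) = (\<Sum>i\<in>S. f i * esym f (S - {i}) k)"
      using insert 0 by (simp add: esym0)
    also have "\<dots> = esym f S (Suc k)" using insert.IH[of k] 0 by simp
    finally show ?thesis using E 0 insert by (simp add: esym0)
  next
    case (Suc k')
    have "(\<Sum>i\<in>S. f i * esym f (insert a (S - {i})) k)
        = (\<Sum>i\<in>S. f i * esym f (S - {i}) k + f a * (f i * esym f (S - {i}) k'))"
    proof (rule sum.cong[OF refl])
      fix i assume "i \<in> S"
      have "esym f (insert a (S - {i})) (Suc k') = esym f (S - {i}) (Suc k') + f a * esym f (S - {i}) k'"
        using esym_Suc[of "insert a (S - {i})" a f k'] insert by (simp add: insert_Diff_if)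
      then show "f i * esym f (insert a (S - {i})) k = f i * esym f (S - {i}) k + f a * (f i * esym f (S - {i}) k')"
        using Suc by (simp add: algebra_simps)
    qed
    also have "\<dots> = of_nat (Suc k) * esym f S (Suc k) + f a * (of_nat (Suc k') * esym f S k)"
      using insert.IH[of k] insert.IH[of k'] Suc by (simp add: sum.distrib sum_distrib_left[symmetric])
    finally show ?thesis using E Suc by (simp add: algebra_simps)
  qed
  finally show ?case .
qed

lemma esym_nonzero_part: assumes "finite S"
  shows "esym f S k = esym f {i\<in>S. f i \<noteq> 0} k"
  unfolding esym_def
proof (rule sum.mono_neutral_right)
  show "finite {T. T \<subseteq> S \<and> card T = k}" using esym_fin[OF assms] .
  show "{T. T \<subseteq> {i \<in> S. f i \<noteq> 0} \<and> card T = k} \<subseteq> {T. T \<subseteq> S \<and> card T = k}" by auto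
  show "\<forall>T\<in>{T. T \<subseteq> S \<and> card T = k} - {T. T \<subseteq> {i \<in> S. f i \<noteq> 0} \<and> card T = k}. (\<Prod>t\<in>T. f t) = 0"
  proof
    fix T assume T: "T \<in> {T. T \<subseteq> S \<and> card T = k} - {T. T \<subseteq> {i \<in> S. f i \<noteq> 0} \<and> card T = k}"
    then obtain t where "t \<in> T" "f t = 0" by auto
    moreover have "finite T" using T assms by (auto intro: finite_subset)
    ultimately show "(\<Prod>t\<in>T. f t) = 0" by (meson prod_zero)
  qed
qed

lemma esym_big: assumes "finite S" "card S < k" shows "esym f S k = 0"
proof -
  have "\<not> (T \<subseteq> S \<and> card T = k)" for T
    using assms card_mono[of S T] by auto
  then have e: "{T. T \<subseteq> S \<and> card T = k} = {}" by blast
  show ?thesis unfolding esym_def e by simp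
qed

lemma esym_top: assumes "finite S" shows "esym f S (card S) = (\<Prod>t\<in>S. f t)"
proof -
  have "T = S" if "T \<subseteq> S" "card T = card S" for T
    using assms that card_subset_eq by blast
  then have e: "{T. T \<subseteq> S \<and> card T = card S} = {S}" by auto
  show ?thesis unfolding esym_def e by simp
qed

lemma fl_scalar:
  fixes f :: "nat \<Rightarrow> complex" and d :: "nat \<Rightarrow> nat \<Rightarrow> complex"
  assumes d0: "\<And>i. i < N \<Longrightarrow> d 0 i = f i"
    and dS: "\<And>k i. i < N \<Longrightarrow> d (Suc k) i = f i * (d k i - (\<Sum>j<N. d k j) / of_nat (Suc k))"
  shows "(\<Sum>j<N. d k j) / of_nat (Suc k) = (-1)^k * esym f {..<N} (Suc k)"
proof -
  let ?I = "{..<N}"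
  have fI: "finite ?I" by simp
  have main: "\<forall>i<N. d k i = (-1)^k * f i * esym f (?I - {i}) k" for k
  proof (induction k)
    case 0
    then show ?case using d0 by (simp add: esym0)
  next
    case (Suc k)
    have s: "(\<Sum>j<N. d k j) = (-1)^k * of_nat (Suc k) * esym f ?I (Suc k)"
    proof -
      have "(\<Sum>j<N. d k j) = (\<Sum>j\<in>?I. (-1)^k * (f j * esym f (?I - {j}) k))"
        using Suc.IH by (intro sum.cong) (auto simp: mult.assoc)
      also have "\<dots> = (-1)^k * of_nat (Suc k) * esym f ?I (Suc k)"
        by (simp add: sum_distrib_left[symmetric] esym_sum[OF fI] mult.assoc)
      finally show ?thesis .
    qed
    show ?case
    proof (intro allI impI)
      fix i assume i: "i < N"
      have E: "esym f ?I (Suc k) = esym f (?I - {i}) (Suc k) + f i * esym f (?I - {i}) k"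
        using esym_Suc[OF fI, of i f k] i by simp
      have "d (Suc k) i = f i * (d k i - (-1)^k * esym f ?I (Suc k))"
        using dS[OF i, of k] s by (simp del: of_nat_Suc)
      also have "\<dots> = (-1)^Suc k * f i * esym f (?I - {i}) (Suc k)"
        using Suc.IH i E by (simp add: algebra_simps)
      finally show "d (Suc k) i = (-1)^Suc k * f i * esym f (?I - {i}) (Suc k)" .
    qed
  qed
  have "(\<Sum>j<N. d k j) = (\<Sum>j\<in>?I. (-1)^k * (f j * esym f (?I - {j}) k))"
    using main by (intro sum.cong) (auto simp: mult.assoc)
  also have "\<dots> = (-1)^k * of_nat (Suc k) * esym f ?I (Suc k)"
    by (simp add: sum_distrib_left[symmetric] esym_sum[OF fI] mult.assoc)
  finally show ?thesis by (simp del: of_nat_Suc)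
qed

definition mtr :: "'a::comm_ring_1 mat \<Rightarrow> 'a" where
  "mtr X = (\<Sum>i\<in>{0..<dim_row X}. X $$ (i,i))"

fun Aseq :: "nat \<Rightarrow> complex mat \<Rightarrow> nat \<Rightarrow> complex mat" where
  "Aseq N A 0 = A"
| "Aseq N A (Suc k) = A * (Aseq N A k - (mtr (Aseq N A k) / of_nat (Suc k)) \<cdot>\<^sub>m 1\<^sub>m N)"

definition cc :: "nat \<Rightarrow> complex mat \<Rightarrow> nat \<Rightarrow> complex" where
  "cc N A k = mtr (Aseq N A (k - 1)) / of_nat k"

lemma mtr_comm:
  fixes X Y :: "'a::comm_ring_1 mat"
  assumes X: "X \<in> carrier_mat n m" and Y: "Y \<in> carrier_mat m n"
  shows "mtr (X * Y) = mtr (Y * X)"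
proof -
  have "mtr (X * Y) = (\<Sum>i\<in>{0..<n}. \<Sum>l\<in>{0..<m}. X $$ (i,l) * Y $$ (l,i))"
    unfolding mtr_def using X Y by (auto simp: scalar_prod_def intro!: sum.cong)
  also have "\<dots> = (\<Sum>l\<in>{0..<m}. \<Sum>i\<in>{0..<n}. Y $$ (l,i) * X $$ (i,l))"
    by (subst sum.swap) (simp add: mult.commute)
  also have "\<dots> = mtr (Y * X)"
    unfolding mtr_def using X Y by (auto simp: scalar_prod_def intro!: sum.cong)
  finally show ?thesis .
qed

lemma Aseq_carrier: "A \<in> carrier_mat N N \<Longrightarrow> Aseq N A k \<in> carrier_mat N N"
  by (induction k) (auto intro!: mult_carrier_mat minus_carrier_mat)

lemma sim_mult:
  fixes P Q X Y :: "'a::comm_ring_1 mat"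
  assumes P: "P \<in> carrier_mat N N" and Q: "Q \<in> carrier_mat N N" and QP: "Q * P = 1\<^sub>m N"
    and X: "X \<in> carrier_mat N N" and Y: "Y \<in> carrier_mat N N"
  shows "(P * X * Q) * (P * Y * Q) = P * (X * Y) * Q"
proof -
  have "(P * X * Q) * (P * Y * Q) = P * X * (Q * P) * Y * Q"
    using P Q X Y by (simp add: assoc_mult_mat[of _ N N _ N _ N])
  also have "\<dots> = P * (X * Y) * Q" using P Q X Y QP by (simp add: assoc_mult_mat[of _ N N _ N _ N])
  finally show ?thesis .
qed

lemma sim_minus:
  fixes P Q X :: "'a::comm_ring_1 mat"
  assumes P: "P \<in> carrier_mat N N" and Q: "Q \<in> carrier_mat N N" and PQ: "P * Q = 1\<^sub>m N"
    and X: "X \<in> carrier_mat N N"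
  shows "P * X * Q - c \<cdot>\<^sub>m 1\<^sub>m N = P * (X - c \<cdot>\<^sub>m 1\<^sub>m N) * Q"
proof -
  have "P * (X - c \<cdot>\<^sub>m 1\<^sub>m N) = P * X - P * (c \<cdot>\<^sub>m 1\<^sub>m N)"
    using P X by (intro mult_minus_distrib_mat) auto
  also have "P * (c \<cdot>\<^sub>m 1\<^sub>m N) = c \<cdot>\<^sub>m P"
    using P by (simp add: mult_smult_distrib[OF P one_carrier_mat])
  finally have "P * (X - c \<cdot>\<^sub>m 1\<^sub>m N) * Q = (P * X - c \<cdot>\<^sub>m P) * Q" by simp
  also have "\<dots> = P * X * Q - (c \<cdot>\<^sub>m P) * Q"
    using P X Q by (intro minus_mult_distrib_mat) auto
  also have "(c \<cdot>\<^sub>m P) * Q = c \<cdot>\<^sub>m 1\<^sub>m N"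
    using P Q PQ by (simp add: mult_smult_assoc_mat[of _ N N])
  finally show ?thesis by simp
qed

lemma mtr_sim:
  fixes P Q X :: "'a::comm_ring_1 mat"
  assumes P: "P \<in> carrier_mat N N" and Q: "Q \<in> carrier_mat N N" and QP: "Q * P = 1\<^sub>m N"
    and X: "X \<in> carrier_mat N N"
  shows "mtr (P * X * Q) = mtr X"
proof -
  have "mtr (P * X * Q) = mtr (Q * (P * X))"
    using P Q X by (intro mtr_comm[of _ N N]) auto
  also have "Q * (P * X) = X" using P Q X QP
    by (simp add: assoc_mult_mat[of _ N N _ N _ N, symmetric])
  finally show ?thesis .
qed

lemma Aseq_sim:
  assumes wit: "similar_mat_wit A J P Q" and A: "A \<in> carrier_mat N N"
  shows "Aseq N A k = P * Aseq N J k * Q \<and> mtr (Aseq N A k) = mtr (Aseq N J k)"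
proof -
  from similar_mat_witD2[OF A wit] have PQ: "P * Q = 1\<^sub>m N" and QP: "Q * P = 1\<^sub>m N"
    and AJ: "A = P * J * Q" and J: "J \<in> carrier_mat N N" and P: "P \<in> carrier_mat N N"
    and Q: "Q \<in> carrier_mat N N" by auto
  show ?thesis
  proof (induction k)
    case 0
    then show ?case using AJ mtr_sim[OF P Q QP J] by (simp del: assoc_mult_mat)
  next
    case (Suc k)
    let ?X = "Aseq N J k"
    let ?c = "mtr (Aseq N A k) / of_nat (Suc k)"
    have X: "?X \<in> carrier_mat N N" using Aseq_carrier[OF J] .
    have "Aseq N A (Suc k) = (P * J * Q) * (P * ?X * Q - ?c \<cdot>\<^sub>m 1\<^sub>m N)"
      using Suc.IH AJ by simp
    also have "\<dots> = (P * J * Q) * (P * (?X - ?c \<cdot>\<^sub>m 1\<^sub>m N) * Q)"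
      using sim_minus[OF P Q PQ X] by simp
    also have "\<dots> = P * (J * (?X - ?c \<cdot>\<^sub>m 1\<^sub>m N)) * Q"
      using X J by (intro sim_mult[OF P Q QP]) (auto intro: minus_carrier_mat)
    also have "J * (?X - ?c \<cdot>\<^sub>m 1\<^sub>m N) = Aseq N J (Suc k)"
      using conjunct2[OF Suc.IH] by (simp del: of_nat_Suc)
    finally have 1: "Aseq N A (Suc k) = P * Aseq N J (Suc k) * Q" .
    then have "mtr (Aseq N A (Suc k)) = mtr (Aseq N J (Suc k))"
      using mtr_sim[OF P Q QP Aseq_carrier[OF J], of "Suc k"] by (simp only:)
    with 1 show ?case by simp
  qed
qed

definition ut :: "nat \<Rightarrow> 'a::comm_ring_1 mat \<Rightarrow> bool" where
  "ut N X \<longleftrightarrow> (\<forall>i<N. \<forall>j<i. X $$ (i,j) = 0)"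

lemma ut_mult:
  fixes X Y :: "'a::comm_ring_1 mat"
  assumes X: "X \<in> carrier_mat N N" and Y: "Y \<in> carrier_mat N N" and uX: "ut N X" and uY: "ut N Y"
  shows "ut N (X * Y)" and "\<And>i. i < N \<Longrightarrow> (X * Y) $$ (i,i) = X $$ (i,i) * Y $$ (i,i)"
proof -
  have e: "(X * Y) $$ (i,j) = (\<Sum>l\<in>{0..<N}. X $$ (i,l) * Y $$ (l,j))" if "i < N" "j < N" for i j
    using X Y that by (auto simp: scalar_prod_def intro!: sum.cong)
  show "ut N (X * Y)" unfolding ut_def
  proof (intro allI impI)
    fix i j assume i: "i < N" and j: "j < i"
    have "X $$ (i,l) * Y $$ (l,j) = 0" if "l < N" for l
    proof (cases "l < i")
      case True then show ?thesis using uX i unfolding ut_def by auto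
    next
      case False then have "j < l" using j by auto
      then show ?thesis using uY that unfolding ut_def by auto
    qed
    then show "(X * Y) $$ (i,j) = 0" using e[OF i] i j by auto
  qed
  fix i assume i: "i < N"
  have "X $$ (i,l) * Y $$ (l,i) = (if l = i then X $$ (i,i) * Y $$ (i,i) else 0)" if "l < N" for l
  proof (cases "l < i")
    case True then show ?thesis using uX i unfolding ut_def by auto
  next
    case False
    show ?thesis
    proof (cases "l = i")
      case False2: False
      then have "i < l" using False by auto
      then show ?thesis using uY that False2 unfolding ut_def by auto
    qed simp
  qed
  then have "(X * Y) $$ (i,i) = (\<Sum>l\<in>{0..<N}. if l = i then X $$ (i,i) * Y $$ (i,i) else 0)"
    using e[OF i i] by (auto intro!: sum.cong)
  also have "\<dots> = X $$ (i,i) * Y $$ (i,i)" using i by simp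
  finally show "(X * Y) $$ (i,i) = X $$ (i,i) * Y $$ (i,i)" .
qed

lemma ut_minus:
  fixes X :: "'a::comm_ring_1 mat"
  assumes X: "X \<in> carrier_mat N N" and uX: "ut N X"
  shows "ut N (X - c \<cdot>\<^sub>m 1\<^sub>m N)" and "\<And>i. i < N \<Longrightarrow> (X - c \<cdot>\<^sub>m 1\<^sub>m N) $$ (i,i) = X $$ (i,i) - c"
  using X uX unfolding ut_def by auto

lemma Aseq_ut:
  assumes J: "J \<in> carrier_mat N N" and uJ: "ut N J"
  shows "ut N (Aseq N J k)"
proof (induction k)
  case 0 then show ?case using uJ by simp
next
  case (Suc k)
  show ?case using ut_mult(1)[OF J _ uJ ut_minus(1)[OF Aseq_carrier[OF J] Suc.IH]] Aseq_carrier[OF J]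
    by (simp add: minus_carrier_mat)
qed

lemma Aseq_diag:
  assumes J: "J \<in> carrier_mat N N" and uJ: "ut N J" and i: "i < N"
  shows "Aseq N J (Suc k) $$ (i,i) = J $$ (i,i) * (Aseq N J k $$ (i,i) - mtr (Aseq N J k) / of_nat (Suc k))"
proof -
  have X: "Aseq N J k \<in> carrier_mat N N" using Aseq_carrier[OF J] .
  note u = ut_minus[OF X Aseq_ut[OF J uJ], where c = "mtr (Aseq N J k) / of_nat (Suc k)"]
  show ?thesis
    using ut_mult(2)[OF J _ uJ u(1) i] u(2)[OF i] X by (simp add: minus_carrier_mat)
qed

lemma diag_jordan:
  "diag_mat (jordan_matrix n_as) = concat (map (\<lambda>(n,a). replicate n a) n_as)"
  unfolding jordan_matrix_def
proof (induct n_as)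
  case Nil
  then show ?case by (simp add: diag_mat_def)
next
  case (Cons na n_as)
  obtain n a where na: "na = (n,a)" by force
  let ?B = "diag_block_mat (map (\<lambda>(x, y). jordan_block x y) n_as)"
  have B: "?B \<in> carrier_mat (dim_row ?B) (dim_row ?B)"
    using jordan_matrix_carrier[of n_as] unfolding jordan_matrix_def carrier_mat_def by auto
  have jb: "diag_mat (jordan_block n a) = replicate n a"
    by (rule nth_equalityI) (auto simp: diag_mat_def)
  show ?case unfolding na
    using diag_four_block_mat[OF jordan_block_carrier B] Cons jb
    by (simp add: Let_def)
qed

lemma rank_pos:
  fixes A :: "complex mat"
  assumes A: "A \<in> carrier_mat N N" and nz: "A \<noteq> 0\<^sub>m N N"
  shows "vec_space.rank N A \<ge> 1"
proof -
  interpret V: vec_space "TYPE(complex)" N .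
  obtain i j where ij: "i < N" "j < N" "A $$ (i,j) \<noteq> 0"
    using nz A by (metis carrier_matD(1) carrier_matD(2) eq_matI index_zero_mat(1) index_zero_mat(2) index_zero_mat(3))
  let ?v = "col A j"
  have v: "?v \<in> carrier_vec N" using A by auto
  have vnz: "?v \<noteq> 0\<^sub>v N" using ij A
    by (metis carrier_matD(1) col_def index_vec index_zero_vec(1))
  have li0: "V.lin_indpt {}"
    by (metis (no_types) empty_subsetI V.fin_dim V.finite_basis_exists V.subset_li_is_li vec_vs vectorspace.basis_def)
  have "?v \<in> V.span {} \<longleftrightarrow> V.lin_dep ({} \<union> {?v})"
    by (rule V.lin_dep_iff_in_span) (use li0 v in auto)
  moreover have "?v \<notin> V.span {}" using V.span_empty vnz by simp
  ultimately have li: "V.lin_indpt {?v}" by simp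
  have "{?v} \<subseteq> set (cols A)" using ij A by (auto simp: cols_def)
  from V.rank_ge_card_indpt[OF A this li] show ?thesis by simp
qed

lemma mult_zero_vec_mat: "B \<in> carrier_mat n m \<Longrightarrow> B *\<^sub>v 0\<^sub>v m = (0\<^sub>v n :: 'a::comm_ring_1 vec)"
  by (intro eq_vecI) (auto simp: scalar_prod_def)

lemma kernel_pow:
  fixes A :: "complex mat"
  assumes A: "A \<in> carrier_mat N N"
    and KP: "\<And>v. v \<in> carrier_vec N \<Longrightarrow> A *\<^sub>v (A *\<^sub>v v) = 0\<^sub>v N \<Longrightarrow> A *\<^sub>v v = 0\<^sub>v N"
  shows "mat_kernel (A ^\<^sub>m Suc k) = mat_kernel A"
proof (induction k)
  case 0
  then show ?case using A by simp
next
  case (Suc k)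
  have Ak: "A ^\<^sub>m Suc k \<in> carrier_mat N N" using pow_carrier_mat[OF A] .
  show ?case
  proof (intro equalityI subsetI)
    fix v assume v: "v \<in> mat_kernel (A ^\<^sub>m Suc (Suc k))"
    then have vc: "v \<in> carrier_vec N" and "(A ^\<^sub>m Suc k * A) *\<^sub>v v = 0\<^sub>v N"
      using A unfolding mat_kernel_def by auto
    then have "A ^\<^sub>m Suc k *\<^sub>v (A *\<^sub>v v) = 0\<^sub>v N" using A Ak by simp
    then have "A *\<^sub>v v \<in> mat_kernel (A ^\<^sub>m Suc k)" using Ak A vc unfolding mat_kernel_def by auto
    then have "A *\<^sub>v (A *\<^sub>v v) = 0\<^sub>v N" using Suc.IH A unfolding mat_kernel_def by auto
    then have "A *\<^sub>v v = 0\<^sub>v N" using KP vc by auto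
    then show "v \<in> mat_kernel A" using vc A unfolding mat_kernel_def by auto
  next
    fix v assume v: "v \<in> mat_kernel A"
    then have vc: "v \<in> carrier_vec N" and Av: "A *\<^sub>v v = 0\<^sub>v N"
      using A unfolding mat_kernel_def by auto
    have "(A ^\<^sub>m Suc k * A) *\<^sub>v v = A ^\<^sub>m Suc k *\<^sub>v (A *\<^sub>v v)" using A Ak vc by simp
    also have "\<dots> = 0\<^sub>v N" unfolding Av by (rule mult_zero_vec_mat[OF Ak])
    finally show "v \<in> mat_kernel (A ^\<^sub>m Suc (Suc k))" using vc A unfolding mat_kernel_def by simp
  qed
qed

lemma kernel_dim_cong:
  fixes A B :: "complex mat"
  assumes A: "A \<in> carrier_mat N N" and B: "B \<in> carrier_mat N N" and eq: "mat_kernel A = mat_kernel B"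
  shows "kernel_dim A = kernel_dim B"
proof -
  interpret KA: kernel N N A by (unfold_locales, rule A)
  interpret KB: kernel N N B by (unfold_locales, rule B)
  show ?thesis using KA.kernel_dim KB.kernel_dim eq by simp
qed

lemma count_zero_blocks:
  "length (filter P (concat (map (\<lambda>(n,a). replicate n a) xs))) = sum_list (map fst (filter (\<lambda>(n,e). P e) xs))"
  by (induction xs) auto

theorem mat_main:
  fixes A :: "complex mat"
  assumes A: "A \<in> carrier_mat N N" and N: "N \<ge> 1"
    and KP: "\<And>v. v \<in> carrier_vec N \<Longrightarrow> A *\<^sub>v (A *\<^sub>v v) = 0\<^sub>v N \<Longrightarrow> A *\<^sub>v v = 0\<^sub>v N"
  shows "(\<forall>j. vec_space.rank N A < j \<longrightarrow> cc N A j = 0) \<and>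
         (vec_space.rank N A \<ge> 1 \<longrightarrow> cc N A (vec_space.rank N A) \<noteq> 0)"
proof -
  obtain as where "char_poly A = (\<Prod>a\<leftarrow>as. [:- a, 1:])"
    using char_poly_factorized[OF A] by auto
  from jordan_nf_exists[OF A this] obtain n_as where jnf: "jordan_nf A n_as" by auto
  let ?J = "jordan_matrix n_as"
  let ?L = "concat (map (\<lambda>(n,a). replicate n a) n_as)"
  from jnf have "similar_mat A ?J" unfolding jordan_nf_def by auto
  then obtain P Q where wit: "similar_mat_wit A ?J P Q" unfolding similar_mat_def by auto
  from similar_mat_witD2[OF A wit] have J: "?J \<in> carrier_mat N N" by auto
  then have sumN: "sum_list (map fst n_as) = N" by auto
  have uJ: "ut N ?J" unfolding ut_def using jordan_matrix_upper_triangular sumN by auto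
  define f where "f i = ?J $$ (i,i)" for i
  have fL: "f i = ?L ! i" if "i < N" for i
  proof -
    have "?L ! i = diag_mat ?J ! i" using diag_jordan[of n_as] by simp
    also have "\<dots> = ?J $$ (i,i)" using that sumN by (simp add: diag_mat_def)
    finally show ?thesis unfolding f_def by simp
  qed
  have lenL: "length ?L = N"
  proof -
    have "length (diag_mat ?J) = N" using sumN by (simp add: diag_mat_def)
    then show ?thesis using diag_jordan[of n_as] by simp
  qed
  define Z where "Z = {i \<in> {..<N}. f i \<noteq> 0}"
  have fZ: "finite Z" unfolding Z_def by auto
  have kd: "kernel_dim A = card {i. i < N \<and> f i = 0}"
  proof -
    obtain N' where N': "N = Suc N'" using N by (cases N) auto
    have "kernel_dim A = kernel_dim (A ^\<^sub>m N)"
      by (rule kernel_dim_cong[OF A pow_carrier_mat[OF A]]) (use kernel_pow[OF A KP, of N'] N' in simp)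
    also have "A ^\<^sub>m N = (char_matrix A 0) ^\<^sub>m N"
    proof -
      have "char_matrix A 0 = A" unfolding char_matrix_def using A by (intro eq_matI) auto
      then show ?thesis by simp
    qed
    also have "kernel_dim \<dots> = dim_gen_eigenspace A 0 N" unfolding dim_gen_eigenspace_def ..
    also have "\<dots> = (\<Sum>n\<leftarrow>map fst [(n, e)\<leftarrow>n_as . e = 0]. min N n)"
      by (rule dim_gen_eigenspace[OF jnf])
    also have "\<dots> = (\<Sum>n\<leftarrow>map fst [(n, e)\<leftarrow>n_as . e = 0]. n)"
    proof -
      have "min N n = n" if "n \<in> set (map fst [(n, e)\<leftarrow>n_as . e = 0])" for n
      proof -
        have "n \<in> set (map fst n_as)" using that by auto
        then have "n \<le> sum_list (map fst n_as)" by (rule member_le_sum_list) auto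
        then show ?thesis using sumN by simp
      qed
      then have "map (\<lambda>n. min N n) (map fst [(n, e)\<leftarrow>n_as . e = 0]) = map fst [(n, e)\<leftarrow>n_as . e = 0]"
        by (intro map_idI) blast
      then show ?thesis by (simp only: map_ident)
    qed
    also have "\<dots> = length (filter (\<lambda>x. x = 0) ?L)"
      using count_zero_blocks[of "\<lambda>x. x = 0" n_as] by simp
    also have "\<dots> = card {i. i < N \<and> f i = 0}"
      unfolding length_filter_conv_card lenL using fL by (intro arg_cong[where f = card]) auto
    finally show ?thesis .
  qed
  have rank: "vec_space.rank N A = card Z"
  proof -
    have "card {i. i < N \<and> f i = 0} + card Z = N"
    proof -
      have "{..<N} = {i. i < N \<and> f i = 0} \<union> Z" unfolding Z_def by auto
      moreover have "{i. i < N \<and> f i = 0} \<inter> Z = {}" unfolding Z_def by auto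
      ultimately show ?thesis using card_Un_disjoint[of "{i. i < N \<and> f i = 0}" Z] fZ
        by (metis (no_types, lifting) card_lessThan finite_Un finite_lessThan)
    qed
    then show ?thesis using rank_nullity_mat[OF A] kd by simp
  qed
  define d where "d k i = Aseq N ?J k $$ (i,i)" for k i
  have mtrd: "mtr (Aseq N ?J k) = (\<Sum>j<N. d k j)" for k
    unfolding mtr_def d_def using Aseq_carrier[OF J, of k] by (simp add: atLeast0LessThan)
  have ccf: "cc N A (Suc k) = (-1)^k * esym f {..<N} (Suc k)" for k
  proof -
    have "cc N A (Suc k) = mtr (Aseq N ?J k) / of_nat (Suc k)"
      unfolding cc_def using conjunct2[OF Aseq_sim[OF wit A, of k]] by simp
    also have "\<dots> = (\<Sum>j<N. d k j) / of_nat (Suc k)" by (simp add: mtrd)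
    also have "\<dots> = (-1)^k * esym f {..<N} (Suc k)"
    proof (rule fl_scalar)
      show "d 0 i = f i" if "i < N" for i unfolding d_def f_def by simp
      show "d (Suc k) i = f i * (d k i - (\<Sum>j<N. d k j) / of_nat (Suc k))" if "i < N" for k i
        unfolding d_def f_def using Aseq_diag[OF J uJ that, of k] mtrd[of k] d_def by simp
    qed
    finally show ?thesis .
  qed
  have ez: "esym f {..<N} j = esym f Z j" for j
    unfolding Z_def by (rule esym_nonzero_part) simp
  show ?thesis
  proof (intro conjI allI impI)
    fix j assume j: "vec_space.rank N A < j"
    then obtain k where k: "j = Suc k" by (cases j) auto
    show "cc N A j = 0" unfolding k ccf ez using esym_big[OF fZ] j rank k by simp
  next
    assume r: "vec_space.rank N A \<ge> 1"
    then obtain k where k: "vec_space.rank N A = Suc k" by (cases "vec_space.rank N A") auto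
    have "esym f Z (card Z) \<noteq> 0" unfolding esym_top[OF fZ]
      using fZ by (simp add: Z_def)
    then show "cc N A (vec_space.rank N A) \<noteq> 0" unfolding k ccf ez using rank k by simp
  qed
qed

definition clbas :: "nat set \<Rightarrow> cl" where "clbas A = (\<lambda>B. if B = A then 1 else 0)"
definition clsc :: "complex \<Rightarrow> cl \<Rightarrow> cl" where "clsc c X = (\<lambda>A. c * X A)"
definition clsd :: "nat set \<Rightarrow> nat set \<Rightarrow> nat set" where "clsd A B = (A - B) \<union> (B - A)"

lemma sd_sym: "clsd A B = clsd B A" unfolding clsd_def by auto
lemma sd_self: "clsd A A = {}" unfolding clsd_def by auto
lemma sd_empty: "clsd {} A = A" "clsd A {} = A" unfolding clsd_def by auto
lemma sd_sub: "A \<subseteq> S \<Longrightarrow> B \<subseteq> S \<Longrightarrow> clsd A B \<subseteq> S" unfolding clsd_def by auto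
lemma sd_eq_empty: "clsd A B = {} \<longleftrightarrow> A = B" unfolding clsd_def by auto

lemma cl_mult_sd: "cl_mult p q X Y = (\<lambda>C. \<Sum>A\<in>Pow {1..p+q}. \<Sum>B\<in>Pow {1..p+q}.
      (if clsd A B = C then X A * Y B * blade_coeff p A B else 0))"
  unfolding cl_mult_def clsd_def ..

lemma mult_carrier: "cl_mult p q X Y \<in> cl_carrier p q"
  unfolding cl_carrier_def cl_mult_sd
proof (intro CollectI allI impI)
  fix C assume C: "\<not> C \<subseteq> {1..p+q}"
  show "(\<Sum>A\<in>Pow {1..p+q}. \<Sum>B\<in>Pow {1..p+q}. if clsd A B = C then X A * Y B * blade_coeff p A B else 0) = 0"
  proof (rule sum.neutral, intro ballI, rule sum.neutral, intro ballI)
    fix A B assume "A \<in> Pow {1..p+q}" "B \<in> Pow {1..p+q}"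
    then have "clsd A B \<subseteq> {1..p+q}" by (intro sd_sub) auto
    then have "clsd A B \<noteq> C" using C by auto
    then show "(if clsd A B = C then X A * Y B * blade_coeff p A B else 0) = 0" by simp
  qed
qed

lemma mult_zero_right: "cl_mult p q X (\<lambda>A. 0) = (\<lambda>A. 0)"
  unfolding cl_mult_def by simp

lemma mult_zero_left: "cl_mult p q (\<lambda>A. 0) X = (\<lambda>A. 0)"
  unfolding cl_mult_def by simp

lemma eb_carrier: "A \<subseteq> {1..p+q} \<Longrightarrow> clbas A \<in> cl_carrier p q"
  unfolding clbas_def cl_carrier_def by auto

lemma scl_carrier: "X \<in> cl_carrier p q \<Longrightarrow> clsc c X \<in> cl_carrier p q"
  unfolding clsc_def cl_carrier_def by auto

lemma one_eb: "cl_one = clbas {}" unfolding cl_one_def clbas_def by auto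

lemma scl_scl: "clsc a (clsc b X) = clsc (a * b) X" unfolding clsc_def by auto
lemma scl_one: "clsc 1 X = X" unfolding clsc_def by auto

lemma mult_scl_left: "cl_mult p q (clsc c X) Y = clsc c (cl_mult p q X Y)"
  unfolding cl_mult_def clsc_def
  by (auto simp: sum_distrib_left intro!: sum.cong)

lemma mult_scl_right: "cl_mult p q X (clsc c Y) = clsc c (cl_mult p q X Y)"
  unfolding cl_mult_def clsc_def
  by (auto simp: sum_distrib_left intro!: sum.cong)

lemma mult_eb_left:
  assumes A: "A \<subseteq> {1..p+q}"
  shows "cl_mult p q (clbas A) X = (\<lambda>C. \<Sum>B\<in>Pow {1..p+q}. if clsd A B = C then X B * blade_coeff p A B else 0)"
proof
  fix C
  have "cl_mult p q (clbas A) X C = (\<Sum>A'\<in>Pow {1..p+q}. if A' = A then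
      (\<Sum>B\<in>Pow {1..p+q}. if clsd A B = C then X B * blade_coeff p A B else 0) else 0)"
    unfolding cl_mult_sd
  proof (intro sum.cong refl)
    fix A' show "(\<Sum>B\<in>Pow {1..p+q}. if clsd A' B = C then clbas A A' * X B * blade_coeff p A' B else 0) =
      (if A' = A then (\<Sum>B\<in>Pow {1..p+q}. if clsd A B = C then X B * blade_coeff p A B else 0) else 0)"
      by (cases "A' = A") (simp_all add: clbas_def cong: if_cong)
  qed
  also have "\<dots> = (\<Sum>B\<in>Pow {1..p+q}. if clsd A B = C then X B * blade_coeff p A B else 0)"
    using A by (subst sum.delta) auto
  finally show "cl_mult p q (clbas A) X C = (\<Sum>B\<in>Pow {1..p+q}. if clsd A B = C then X B * blade_coeff p A B else 0)" .
qed

lemma mult_eb_right: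
  assumes B: "B \<subseteq> {1..p+q}"
  shows "cl_mult p q X (clbas B) = (\<lambda>C. \<Sum>A\<in>Pow {1..p+q}. if clsd A B = C then X A * blade_coeff p A B else 0)"
proof
  fix C
  have "cl_mult p q X (clbas B) C = (\<Sum>A\<in>Pow {1..p+q}. \<Sum>B'\<in>Pow {1..p+q}. if B' = B then
      (if clsd A B = C then X A * blade_coeff p A B else 0) else 0)"
    unfolding cl_mult_sd clbas_def by (intro sum.cong) auto
  also have "\<dots> = (\<Sum>A\<in>Pow {1..p+q}. if clsd A B = C then X A * blade_coeff p A B else 0)"
    using B by (intro sum.cong refl, subst sum.delta) auto
  finally show "cl_mult p q X (clbas B) C = (\<Sum>A\<in>Pow {1..p+q}. if clsd A B = C then X A * blade_coeff p A B else 0)" .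
qed

lemma mult_eb:
  assumes A: "A \<subseteq> {1..p+q}" and B: "B \<subseteq> {1..p+q}"
  shows "cl_mult p q (clbas A) (clbas B) = clsc (blade_coeff p A B) (clbas (clsd A B))"
proof
  fix C
  have "cl_mult p q (clbas A) (clbas B) C = (\<Sum>B'\<in>Pow {1..p+q}. if B' = B then
      (if clsd A B = C then blade_coeff p A B else 0) else 0)"
  proof -
    have "cl_mult p q (clbas A) (clbas B) C = (\<Sum>B'\<in>Pow {1..p+q}. if clsd A B' = C then clbas B B' * blade_coeff p A B' else 0)"
      by (simp add: mult_eb_left[OF A])
    also have "\<dots> = (\<Sum>B'\<in>Pow {1..p+q}. if B' = B then
      (if clsd A B = C then blade_coeff p A B else 0) else 0)"
      unfolding clbas_def by (intro sum.cong) auto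
    finally show ?thesis .
  qed
  also have "\<dots> = clsc (blade_coeff p A B) (clbas (clsd A B)) C"
    using B unfolding clsc_def clbas_def by (subst sum.delta) auto
  finally show "cl_mult p q (clbas A) (clbas B) C = clsc (blade_coeff p A B) (clbas (clsd A B)) C" .
qed

lemma eta_sq: "cl_eta p a * cl_eta p a = 1" unfolding cl_eta_def by auto
lemma eta_cnj: "cnj (cl_eta p a) = cl_eta p a" unfolding cl_eta_def by auto

lemma blade_sq: "blade_coeff p A B * blade_coeff p A B = 1"
proof -
  have "(\<Prod>a\<in>A \<inter> B. cl_eta p a) * (\<Prod>a\<in>A \<inter> B. cl_eta p a) = (\<Prod>a\<in>A \<inter> B. cl_eta p a * cl_eta p a)"
    by (simp add: prod.distrib)
  also have "\<dots> = 1" by (simp add: eta_sq)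
  finally have P: "(\<Prod>a\<in>A \<inter> B. cl_eta p a) * (\<Prod>a\<in>A \<inter> B. cl_eta p a) = 1" .
  have "((-1::complex) ^ card {(a, b). a \<in> A \<and> b \<in> B \<and> b < a}) * ((-1) ^ card {(a, b). a \<in> A \<and> b \<in> B \<and> b < a}) = 1"
    by (simp add: power_add[symmetric])
  then show ?thesis using P unfolding blade_coeff_def by (simp add: algebra_simps)
qed

lemma blade_cnj: "cnj (blade_coeff p A B) = blade_coeff p A B"
  unfolding blade_coeff_def by (simp add: cnj_prod eta_cnj)

lemma blade_nz: "blade_coeff p A B \<noteq> 0"
  using blade_sq[of p A B] by auto

lemma blade_empty: "blade_coeff p {} A = 1" "blade_coeff p A {} = 1"
  unfolding blade_coeff_def by auto

lemma dagger_carrier: "X \<in> cl_carrier p q \<Longrightarrow> cl_dagger p X \<in> cl_carrier p q"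
  unfolding cl_dagger_def cl_carrier_def by auto

lemma dagger_dagger: "cl_dagger p (cl_dagger p X) = X"
proof
  fix A
  have "cnj (cnj (X A) * blade_coeff p A A) * blade_coeff p A A = X A * (blade_coeff p A A * blade_coeff p A A)"
    by (simp add: blade_cnj)
  then show "cl_dagger p (cl_dagger p X) A = X A" unfolding cl_dagger_def by (simp add: blade_sq)
qed

lemma smult_zero_mat: "B \<in> carrier_mat n m \<Longrightarrow> (0::complex) \<cdot>\<^sub>m B = 0\<^sub>m n m"
  by (intro eq_matI) auto

locale cliso =
  fixes p q :: nat and \<beta> :: "cl \<Rightarrow> complex mat"
  assumes iso: "cl_iso p q \<beta>"
begin

abbreviation "K \<equiv> cl_carrier p q"
abbreviation "NN \<equiv> cl_N p q"
abbreviation "mul \<equiv> cl_mult p q"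
abbreviation "bc \<equiv> blade_coeff p"
abbreviation "PP \<equiv> Pow {1..p+q}"

lemma bij: "bij_betw \<beta> K (cl_target p q)" using iso unfolding cl_iso_def by auto
lemma target_carrier: "cl_target p q \<subseteq> carrier_mat NN NN" unfolding cl_target_def by auto
lemma beta_target: "X \<in> K \<Longrightarrow> \<beta> X \<in> cl_target p q" using bij bij_betwE by blast
lemma beta_carrier: "X \<in> K \<Longrightarrow> \<beta> X \<in> carrier_mat NN NN" using beta_target target_carrier by blast
lemma beta_inj: "X \<in> K \<Longrightarrow> Y \<in> K \<Longrightarrow> \<beta> X = \<beta> Y \<Longrightarrow> X = Y"
  using bij unfolding bij_betw_def inj_on_def by blast
lemma beta_surj: "T \<in> cl_target p q \<Longrightarrow> \<exists>X\<in>K. \<beta> X = T"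
  using bij unfolding bij_betw_def by (metis imageE)
lemma beta_add: "X \<in> K \<Longrightarrow> Y \<in> K \<Longrightarrow> \<beta> (\<lambda>A. X A + Y A) = \<beta> X + \<beta> Y"
  using iso unfolding cl_iso_def by auto
lemma beta_scl: "X \<in> K \<Longrightarrow> \<beta> (clsc c X) = c \<cdot>\<^sub>m \<beta> X"
  using iso unfolding cl_iso_def clsc_def by auto
lemma beta_mult: "X \<in> K \<Longrightarrow> Y \<in> K \<Longrightarrow> \<beta> (mul X Y) = \<beta> X * \<beta> Y"
  using iso unfolding cl_iso_def by auto
lemma beta_one: "\<beta> cl_one = 1\<^sub>m NN"
  using iso unfolding cl_iso_def by auto
lemma zero_carrier: "(\<lambda>A. 0) \<in> K" unfolding cl_carrier_def by auto
lemma one_carrier: "cl_one \<in> K" unfolding one_eb by (rule eb_carrier) auto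
lemma beta_zero: "\<beta> (\<lambda>A. 0) = 0\<^sub>m NN NN"
proof -
  have "clsc 0 (\<lambda>A. 0) = (\<lambda>A. 0)" unfolding clsc_def by simp
  then have "\<beta> (\<lambda>A. 0) = 0 \<cdot>\<^sub>m \<beta> (\<lambda>A. 0)" using beta_scl[OF zero_carrier, of 0] by simp
  then show ?thesis using smult_zero_mat[OF beta_carrier[OF zero_carrier]] by simp
qed

lemma assoc: assumes "X \<in> K" "Y \<in> K" "Z \<in> K"
  shows "mul (mul X Y) Z = mul X (mul Y Z)"
proof (rule beta_inj[OF mult_carrier mult_carrier])
  have "\<beta> (mul (mul X Y) Z) = (\<beta> X * \<beta> Y) * \<beta> Z"
    using assms by (simp add: beta_mult mult_carrier)
  also have "\<dots> = \<beta> X * (\<beta> Y * \<beta> Z)"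
    using assms by (intro assoc_mult_mat[OF beta_carrier beta_carrier beta_carrier])
  also have "\<dots> = \<beta> (mul X (mul Y Z))"
    using assms by (simp add: beta_mult mult_carrier)
  finally show "\<beta> (mul (mul X Y) Z) = \<beta> (mul X (mul Y Z))" .
qed

lemma one_left: "X \<in> K \<Longrightarrow> mul cl_one X = X"
  by (rule beta_inj[OF mult_carrier]) (auto simp: beta_mult one_carrier beta_one left_mult_one_mat[OF beta_carrier])

lemma one_right: "X \<in> K \<Longrightarrow> mul X cl_one = X"
  by (rule beta_inj[OF mult_carrier]) (auto simp: beta_mult one_carrier beta_one right_mult_one_mat[OF beta_carrier])

lemma cocycle:
  assumes A: "A \<subseteq> {1..p+q}" and B: "B \<subseteq> {1..p+q}"
  shows "bc A B * bc (clsd A B) (clsd A B) = bc A A * bc B B * bc B A"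
proof -
  let ?e = clbas
  define C where "C = clsd A B"
  have C: "C \<subseteq> {1..p+q}" unfolding C_def using A B by (rule sd_sub)
  have E: "{} \<subseteq> {1..p+q}" by simp
  have eA: "?e A \<in> K" and eB: "?e B \<in> K" and eC: "?e C \<in> K" and eE: "?e {} \<in> K"
    using eb_carrier[OF A] eb_carrier[OF B] eb_carrier[OF C] eb_carrier[OF E] by auto
  have h1: "mul (?e A) (?e B) = clsc (bc A B) (?e C)" unfolding C_def by (rule mult_eb[OF A B])
  have h2: "mul (?e B) (?e A) = clsc (bc B A) (?e C)"
    unfolding C_def using mult_eb[OF B A] sd_sym by metis
  have "mul (mul (?e A) (?e B)) (mul (?e B) (?e A)) = clsc (bc B A) (clsc (bc A B) (mul (?e C) (?e C)))"
    unfolding h1 h2 mult_scl_left mult_scl_right ..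
  also have "mul (?e C) (?e C) = clsc (bc C C) (?e {})" using mult_eb[OF C C] sd_self by simp
  finally have L: "mul (mul (?e A) (?e B)) (mul (?e B) (?e A)) = clsc (bc B A) (clsc (bc A B) (clsc (bc C C) (?e {})))" .
  have "mul (?e B) (mul (?e B) (?e A)) = mul (mul (?e B) (?e B)) (?e A)"
    using assoc[OF eB eB eA] by simp
  also have "\<dots> = clsc (bc B B) (mul (?e {}) (?e A))"
    using mult_eb[OF B B] sd_self mult_scl_left by simp
  also have "mul (?e {}) (?e A) = ?e A" using mult_eb[OF E A] sd_empty blade_empty scl_one by simp
  finally have "mul (?e B) (mul (?e B) (?e A)) = clsc (bc B B) (?e A)" .
  then have "mul (?e A) (mul (?e B) (mul (?e B) (?e A))) = clsc (bc B B) (clsc (bc A A) (?e {}))"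
    using mult_scl_right mult_eb[OF A A] sd_self by simp
  moreover have "mul (mul (?e A) (?e B)) (mul (?e B) (?e A)) = mul (?e A) (mul (?e B) (mul (?e B) (?e A)))"
    using assoc[OF eA eB] mult_carrier by simp
  ultimately have "clsc (bc B A) (clsc (bc A B) (clsc (bc C C) (?e {}))) = clsc (bc B B) (clsc (bc A A) (?e {}))"
    using L by simp
  then have "clsc (bc B A) (clsc (bc A B) (clsc (bc C C) (?e {}))) {} = clsc (bc B B) (clsc (bc A A) (?e {})) {}"
    by (rule fun_cong)
  then have "bc A B * (bc B A * bc C C) = bc B B * bc A A"
    unfolding clsc_def clbas_def by (simp add: algebra_simps)
  then have "bc A B * bc C C * (bc B A * bc B A) = bc A A * bc B B * bc B A"
    by (simp add: algebra_simps)
  then show ?thesis unfolding C_def using blade_sq[of p B A] by simp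
qed

lemma dagger_mult:
  assumes X: "X \<in> K" and Y: "Y \<in> K"
  shows "cl_dagger p (mul X Y) = mul (cl_dagger p Y) (cl_dagger p X)"
proof
  fix C
  have "cl_dagger p (mul X Y) C = cnj (\<Sum>A\<in>PP. \<Sum>B\<in>PP. if clsd A B = C then X A * Y B * bc A B else 0) * bc C C"
    unfolding cl_dagger_def cl_mult_sd ..
  also have "\<dots> = (\<Sum>A\<in>PP. \<Sum>B\<in>PP. cnj (if clsd A B = C then X A * Y B * bc A B else 0) * bc C C)"
    by (simp add: cnj_sum sum_distrib_right)
  also have "\<dots> = (\<Sum>A\<in>PP. \<Sum>B\<in>PP. if clsd B A = C then cnj (Y B) * bc B B * (cnj (X A) * bc A A) * bc B A else 0)"
  proof (intro sum.cong refl)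
    fix A B assume A: "A \<in> PP" and B: "B \<in> PP"
    show "cnj (if clsd A B = C then X A * Y B * bc A B else 0) * bc C C =
      (if clsd B A = C then cnj (Y B) * bc B B * (cnj (X A) * bc A A) * bc B A else 0)"
    proof (cases "clsd A B = C")
      case True
      then have "clsd B A = C" using sd_sym by metis
      moreover have "bc A B * bc C C = bc A A * bc B B * bc B A"
        using cocycle[of A B] A B True by auto
      ultimately show ?thesis using True
        by (simp add: blade_cnj)
    next
      case False
      then have "clsd B A \<noteq> C" using sd_sym by metis
      then show ?thesis using False by simp
    qed
  qed
  also have "\<dots> = (\<Sum>B\<in>PP. \<Sum>A\<in>PP. if clsd B A = C then cnj (Y B) * bc B B * (cnj (X A) * bc A A) * bc B A else 0)"
    by (rule sum.swap)
  also have "\<dots> = mul (cl_dagger p Y) (cl_dagger p X) C"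
    unfolding cl_dagger_def cl_mult_sd ..
  finally show "cl_dagger p (mul X Y) C = mul (cl_dagger p Y) (cl_dagger p X) C" .
qed

lemma positivity:
  assumes X: "X \<in> K" and z: "mul (cl_dagger p X) X = (\<lambda>A. 0)"
  shows "X = (\<lambda>A. 0)"
proof -
  have "mul (cl_dagger p X) X {} = (\<Sum>A\<in>PP. \<Sum>B\<in>PP. if B = A then complex_of_real ((cmod (X A))^2) else 0)"
    unfolding cl_mult_sd cl_dagger_def
  proof (intro sum.cong refl)
    fix A B assume "A \<in> PP" "B \<in> PP"
    show "(if clsd A B = {} then cnj (X A) * bc A A * X B * bc A B else 0) =
      (if B = A then complex_of_real ((cmod (X A))^2) else 0)"
    proof (cases "B = A")
      case True
      have "cnj (X A) * bc A A * X A * bc A A = cnj (X A) * X A * (bc A A * bc A A)" by (simp add: algebra_simps)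
      also have "\<dots> = complex_of_real ((cmod (X A))^2)"
        using complex_norm_square[of "X A"] by (simp add: blade_sq mult.commute)
      finally show ?thesis using True sd_self by simp
    next
      case False
      then have "clsd A B \<noteq> {}" using sd_eq_empty by metis
      then show ?thesis using False by simp
    qed
  qed
  also have "\<dots> = (\<Sum>A\<in>PP. complex_of_real ((cmod (X A))^2))"
    by (intro sum.cong refl) simp
  also have "\<dots> = complex_of_real (\<Sum>A\<in>PP. (cmod (X A))^2)" by (simp only: of_real_sum)
  finally have eq: "mul (cl_dagger p X) X {} = complex_of_real (\<Sum>A\<in>PP. (cmod (X A))^2)" .
  have "mul (cl_dagger p X) X {} = 0" using z by simp
  then have "complex_of_real (\<Sum>A\<in>PP. (cmod (X A))^2) = 0" unfolding eq .
  then have "(\<Sum>A\<in>PP. (cmod (X A))^2) = 0" by (simp only: of_real_eq_0_iff)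
  then have "\<forall>A\<in>PP. (cmod (X A))^2 = 0"
    by (subst sum_nonneg_eq_0_iff[symmetric]) auto
  then have in0: "\<forall>A\<in>PP. X A = 0" by simp
  show ?thesis
  proof
    fix A show "X A = 0"
    proof (cases "A \<subseteq> {1..p+q}")
      case True then show ?thesis using in0 by auto
    next
      case False then show ?thesis using X unfolding cl_carrier_def by auto
    qed
  qed
qed

lemma normal_kernel:
  assumes M: "M \<in> K" and nor: "cl_normal p q M" and X: "X \<in> K"
    and z: "mul M (mul M X) = (\<lambda>A. 0)"
  shows "mul M X = (\<lambda>A. 0)"
proof -
  let ?d = "cl_dagger p"
  define W where "W = mul M X"
  have W: "W \<in> K" unfolding W_def by (rule mult_carrier)
  have Md: "?d M \<in> K" and Wd: "?d W \<in> K" and Xd: "?d X \<in> K" using M W X by (auto intro: dagger_carrier)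
  have MW: "mul M W = (\<lambda>A. 0)" using z unfolding W_def .
  define Z where "Z = mul (?d M) W"
  have Z: "Z \<in> K" unfolding Z_def by (rule mult_carrier)
  have dZ: "?d Z = mul (?d W) M" unfolding Z_def using dagger_mult[OF Md W] dagger_dagger by simp
  have "mul (?d Z) Z = mul (mul (?d W) M) Z" using dZ by simp
  also have "\<dots> = mul (?d W) (mul M Z)" using assoc[OF Wd M Z] .
  also have "mul M Z = mul (mul M (?d M)) W" unfolding Z_def using assoc[OF M Md W] by simp
  also have "mul M (?d M) = mul (?d M) M" using nor unfolding cl_normal_def by simp
  also have "mul (mul (?d M) M) W = mul (?d M) (mul M W)" using assoc[OF Md M W] by simp
  finally have "mul (?d Z) Z = (\<lambda>A. 0)" unfolding MW by (simp add: mult_zero_right)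
  then have Z0: "Z = (\<lambda>A. 0)" by (rule positivity[OF Z])
  have "?d W = mul (?d X) (?d M)" unfolding W_def by (rule dagger_mult[OF M X])
  then have "mul (?d W) W = mul (?d X) Z" unfolding Z_def using assoc[OF Xd Md W] by simp
  then have "mul (?d W) W = (\<lambda>A. 0)" unfolding Z0 by (simp add: mult_zero_right)
  then show ?thesis unfolding W_def[symmetric] by (rule positivity[OF W])
qed

end

lemma cnt_sum:
  fixes A B :: "nat set"
  assumes A: "finite A" and B: "finite B"
  shows "card {(a, b). a \<in> A \<and> b \<in> B \<and> b < a} + card {(a, b). a \<in> B \<and> b \<in> A \<and> b < a} + card (A \<inter> B) = card A * card B"
proof -
  let ?S1 = "{(a, b). a \<in> A \<and> b \<in> B \<and> b < a}"
  let ?S2 = "{(a, b). a \<in> A \<and> b \<in> B \<and> a < b}"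
  let ?S3 = "{(a, b). a \<in> A \<and> b \<in> B \<and> a = b}"
  let ?T = "{(a, b). a \<in> B \<and> b \<in> A \<and> b < a}"
  have fAB: "finite (A \<times> B)" using A B by simp
  have f1: "finite ?S1" by (rule finite_subset[OF _ fAB]) auto
  have f2: "finite ?S2" by (rule finite_subset[OF _ fAB]) auto
  have f3: "finite ?S3" by (rule finite_subset[OF _ fAB]) auto
  have U: "A \<times> B = ?S1 \<union> ?S2 \<union> ?S3" by auto
  have "card (A \<times> B) = card (?S1 \<union> ?S2 \<union> ?S3)" using U by simp
  also have "\<dots> = card (?S1 \<union> ?S2) + card ?S3"
    by (rule card_Un_disjoint) (use f1 f2 f3 in auto)
  also have "card (?S1 \<union> ?S2) = card ?S1 + card ?S2"
    by (rule card_Un_disjoint) (use f1 f2 in auto)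
  also have "card ?S2 = card ?T"
  proof -
    have eq: "?S2 = (\<lambda>(x, y). (y, x)) ` ?T" by auto
    have inj: "inj_on (\<lambda>(x, y). (y, x)) ?T" unfolding inj_on_def by auto
    show ?thesis unfolding eq by (rule card_image[OF inj])
  qed
  also have "card ?S3 = card (A \<inter> B)"
  proof -
    have eq: "?S3 = (\<lambda>x. (x, x)) ` (A \<inter> B)" by auto
    have inj: "inj_on (\<lambda>x. (x, x)) (A \<inter> B)" unfolding inj_on_def by auto
    show ?thesis unfolding eq by (rule card_image[OF inj])
  qed
  finally show ?thesis by (simp add: card_cartesian_product)
qed

lemma blade_swap:
  assumes A: "finite A" and B: "finite B"
  shows "blade_coeff p A B = (-1) ^ (card A * card B - card (A \<inter> B)) * blade_coeff p B A"
proof -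
  let ?c1 = "card {(a, b). a \<in> A \<and> b \<in> B \<and> b < a}"
  let ?c2 = "card {(a, b). a \<in> B \<and> b \<in> A \<and> b < a}"
  have m: "card A * card B - card (A \<inter> B) = ?c1 + ?c2" using cnt_sum[OF A B] by linarith
  have "(-1::complex) ^ (?c1 + ?c2) * (-1) ^ ?c2 = (-1) ^ ?c1 * ((-1) ^ ?c2 * (-1) ^ ?c2)"
    by (simp add: power_add)
  also have "(-1::complex) ^ ?c2 * (-1) ^ ?c2 = 1" by (simp add: power_add[symmetric])
  finally have "(-1::complex) ^ (?c1 + ?c2) * (-1) ^ ?c2 = (-1) ^ ?c1" by simp
  then show ?thesis unfolding blade_coeff_def m by (simp add: Int_commute mult.assoc)
qed

lemma mtr_add: "X \<in> carrier_mat n n \<Longrightarrow> Y \<in> carrier_mat n n \<Longrightarrow> mtr (X + Y) = mtr X + mtr Y"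
  unfolding mtr_def by (simp add: sum.distrib)

lemma mtr_smult: "X \<in> carrier_mat n n \<Longrightarrow> mtr (c \<cdot>\<^sub>m X) = c * mtr X"
  unfolding mtr_def by (auto simp: sum_distrib_left intro!: sum.cong)

lemma mtr_one: "mtr (1\<^sub>m n :: complex mat) = of_nat n"
  unfolding mtr_def by simp

lemma mtr_zero: "mtr (0\<^sub>m n n :: complex mat) = 0"
  unfolding mtr_def by simp

context cliso
begin

lemma trace_decomp:
  assumes X: "X \<in> K"
  shows "mtr (\<beta> X) = (\<Sum>A\<in>PP. X A * mtr (\<beta> (clbas A)))"
proof -
  define ps where "ps S = (\<lambda>C. \<Sum>A\<in>S. X A * clbas A C)" for S
  have main: "ps S \<in> K \<and> mtr (\<beta> (ps S)) = (\<Sum>A\<in>S. X A * mtr (\<beta> (clbas A)))" if "S \<subseteq> PP" for S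
  proof -
    have fS: "finite S" using that finite_subset by blast
    show ?thesis using fS that
    proof (induction S rule: finite_induct)
      case empty
      have "ps {} = (\<lambda>A. 0)" unfolding ps_def by simp
      then show ?case using zero_carrier beta_zero mtr_zero by simp
    next
      case (insert a F)
      have a: "a \<subseteq> {1..p+q}" using insert by auto
      have ea: "clbas a \<in> K" by (rule eb_carrier[OF a])
      have IH: "ps F \<in> K" "mtr (\<beta> (ps F)) = (\<Sum>A\<in>F. X A * mtr (\<beta> (clbas A)))" using insert by auto
      have eq: "ps (insert a F) = (\<lambda>C. clsc (X a) (clbas a) C + ps F C)"
        unfolding ps_def clsc_def using insert by simp
      have c1: "clsc (X a) (clbas a) \<in> K" by (rule scl_carrier[OF ea])
      have car: "ps (insert a F) \<in> K" unfolding eq cl_carrier_def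
        using c1 IH(1) unfolding cl_carrier_def by auto
      have "\<beta> (ps (insert a F)) = X a \<cdot>\<^sub>m \<beta> (clbas a) + \<beta> (ps F)"
        unfolding eq using beta_add[OF c1 IH(1)] beta_scl[OF ea] by simp
      then have "mtr (\<beta> (ps (insert a F))) = X a * mtr (\<beta> (clbas a)) + mtr (\<beta> (ps F))"
        using mtr_add[of "X a \<cdot>\<^sub>m \<beta> (clbas a)" NN "\<beta> (ps F)"] beta_carrier[OF ea] beta_carrier[OF IH(1)]
        by (simp add: mtr_smult[OF beta_carrier[OF ea]])
      then show ?case using car IH insert by simp
    qed
  qed
  have "ps PP = X"
  proof
    fix C
    have "ps PP C = (\<Sum>A\<in>PP. if A = C then X C else 0)"
      unfolding ps_def clbas_def by (intro sum.cong) auto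
    also have "\<dots> = X C" using X unfolding cl_carrier_def by (cases "C \<in> PP") auto
    finally show "ps PP C = X C" .
  qed
  then show ?thesis using main[of PP] by simp
qed

lemma anticomm_trace:
  assumes A: "A \<subseteq> {1..p+q}" and a: "a \<in> {1..p+q}"
    and anti: "bc {a} A = - bc A {a}"
  shows "mtr (\<beta> (clbas A)) = 0"
proof -
  let ?g = "clbas {a}" and ?e = "clbas A"
  have a': "{a} \<subseteq> {1..p+q}" using a by auto
  have g: "?g \<in> K" and e: "?e \<in> K" using eb_carrier[OF a'] eb_carrier[OF A] by auto
  define \<eta> where "\<eta> = bc {a} {a}"
  have gg: "mul ?g ?g = clsc \<eta> cl_one"
    unfolding \<eta>_def one_eb using mult_eb[OF a' a'] sd_self by simp
  have ge: "mul ?g ?e = clsc (-1) (mul ?e ?g)"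
    using mult_eb[OF a' A] mult_eb[OF A a'] sd_sym[of "{a}" A] anti
    by (simp add: scl_scl)
  have "mul (mul ?g ?e) ?g = clsc (-1) (mul (mul ?e ?g) ?g)" unfolding ge mult_scl_left ..
  also have "mul (mul ?e ?g) ?g = mul ?e (mul ?g ?g)" by (rule assoc[OF e g g])
  also have "\<dots> = clsc \<eta> ?e" unfolding gg mult_scl_right one_right[OF e] ..
  finally have i: "mul (mul ?g ?e) ?g = clsc (-1) (clsc \<eta> ?e)" .
  have "mul ?g (mul ?g ?e) = mul (mul ?g ?g) ?e" using assoc[OF g g e] by simp
  also have "\<dots> = clsc \<eta> ?e" unfolding gg mult_scl_left one_left[OF e] ..
  finally have ii: "mul ?g (mul ?g ?e) = clsc \<eta> ?e" .
  have ge_c: "mul ?g ?e \<in> K" by (rule mult_carrier)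
  have "mtr (\<beta> (mul (mul ?g ?e) ?g)) = mtr (\<beta> (mul ?g ?e) * \<beta> ?g)"
    using beta_mult[OF ge_c g] by simp
  also have "\<dots> = mtr (\<beta> ?g * \<beta> (mul ?g ?e))"
    by (rule mtr_comm[OF beta_carrier[OF ge_c] beta_carrier[OF g]])
  also have "\<dots> = mtr (\<beta> (mul ?g (mul ?g ?e)))" using beta_mult[OF g ge_c] by simp
  finally have "mtr (\<beta> (clsc (-1) (clsc \<eta> ?e))) = mtr (\<beta> (clsc \<eta> ?e))" unfolding i ii .
  then have "- (\<eta> * mtr (\<beta> ?e)) = \<eta> * mtr (\<beta> ?e)"
    using beta_scl[OF scl_carrier[OF e]] beta_scl[OF e] beta_carrier[OF e]
    by (simp add: mtr_smult[OF smult_carrier_mat[OF beta_carrier[OF e]]] mtr_smult[OF beta_carrier[OF e]])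
  moreover have "\<eta> \<noteq> 0" unfolding \<eta>_def by (rule blade_nz)
  ultimately show ?thesis by simp
qed

end

lemma mult_idx:
  fixes X Y :: "'a::comm_ring_1 mat"
  assumes "X \<in> carrier_mat n m" "Y \<in> carrier_mat m r" "i < n" "j < r"
  shows "(X * Y) $$ (i, j) = (\<Sum>l\<in>{0..<m}. X $$ (i, l) * Y $$ (l, j))"
  using assms by (auto simp: scalar_prod_def intro!: sum.cong)

context cliso
begin

lemma NN_split:
  assumes n1: "p + q \<ge> 1"
  shows "NN = 2 * (NN div 2)" "NN div 2 \<ge> 1"
proof -
  obtain k where k: "(p + q + 1) div 2 = Suc k" using n1 by (cases "(p + q + 1) div 2") auto
  have "NN = 2 * 2 ^ k" unfolding cl_N_def k by simp
  then show "NN = 2 * (NN div 2)" "NN div 2 \<ge> 1" by auto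
qed

lemma central_comm:
  assumes odd: "odd (p + q)"
  shows "X \<in> K \<Longrightarrow> mul (clbas {1..p+q}) X = mul X (clbas {1..p+q})"
proof -
  let ?O = "{1..p+q}"
  have O: "?O \<subseteq> {1..p+q}" by simp
  assume X: "X \<in> K"
  show ?thesis unfolding mult_eb_left[OF O] mult_eb_right[OF O]
  proof (intro ext sum.cong refl)
    fix C B assume B: "B \<in> PP"
    have fB: "finite B" using B finite_subset by auto
    have "bc ?O B = (-1) ^ (card ?O * card B - card (?O \<inter> B)) * bc B ?O"
      by (rule blade_swap) (use fB in auto)
    also have "card ?O * card B - card (?O \<inter> B) = (p + q - 1) * card B"
    proof -
      have "?O \<inter> B = B" using B by auto
      then show ?thesis by (simp add: diff_mult_distrib)
    qed
    also have "even ((p + q - 1) * card B)" using odd by simp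
    then have "(-1::complex) ^ ((p + q - 1) * card B) = 1" by simp
    finally have "bc ?O B = bc B ?O" by simp
    then show "(if clsd ?O B = C then X B * bc ?O B else 0) = (if clsd B ?O = C then X B * bc B ?O else 0)"
      using sd_sym[of ?O B] by simp
  qed
qed

lemma central_trace:
  assumes n1: "p + q \<ge> 1" and odd: "odd (p + q)"
  shows "mtr (\<beta> (clbas {1..p+q})) = 0"
proof -
  let ?O = "{1..p+q}"
  define h where "h = NN div 2"
  have NN2: "NN = 2 * h" and h1: "h \<ge> 1" using NN_split[OF n1] unfolding h_def by auto
  have O: "?O \<subseteq> {1..p+q}" by simp
  have eO: "clbas ?O \<in> K" by (rule eb_carrier[OF O])
  define D where "D = \<beta> (clbas ?O)"
  have D: "D \<in> carrier_mat NN NN" unfolding D_def by (rule beta_carrier[OF eO])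
  have comm: "D * T = T * D" if T: "T \<in> cl_target p q" for T
  proof -
    obtain X where X: "X \<in> K" "\<beta> X = T" using beta_surj[OF T] by auto
    have "D * T = \<beta> (mul (clbas ?O) X)" unfolding D_def using beta_mult[OF eO X(1)] X by simp
    also have "\<dots> = \<beta> (mul X (clbas ?O))" using central_comm[OF odd X(1)] by simp
    also have "\<dots> = T * D" unfolding D_def using beta_mult[OF X(1) eO] X by simp
    finally show ?thesis .
  qed
  have tgt: "cl_target p q = {A \<in> carrier_mat NN NN. \<forall>i<NN. \<forall>j<NN. (i < h) \<noteq> (j < h) \<longrightarrow> A $$ (i, j) = 0}"
    unfolding cl_target_def h_def using odd by simp
  define E where "E i j = mat NN NN (\<lambda>(k, l). if k = i \<and> l = j then 1 else (0::complex))" for i j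
  have E_idx: "E i j $$ (k, l) = (if k = i \<and> l = j then 1 else 0)" if "k < NN" "l < NN" for i j k l
    unfolding E_def using that by simp
  have E_car: "E i j \<in> carrier_mat NN NN" for i j unfolding E_def by simp
  have E_tgt: "E i j \<in> cl_target p q" if "i < NN" "j < NN" "(i < h) = (j < h)" for i j
    unfolding tgt using that E_car E_idx by auto
  have col: "D $$ (k, i) = (if k = i then D $$ (j, j) else 0)"
    if ij: "i < NN" "j < NN" "(i < h) = (j < h)" and k: "k < NN" for i j k
  proof -
    have c: "D * E i j = E i j * D" using comm[OF E_tgt[OF ij]] .
    have "(D * E i j) $$ (k, j) = (\<Sum>l\<in>{0..<NN}. D $$ (k, l) * E i j $$ (l, j))"
      by (rule mult_idx[OF D E_car k ij(2)])
    also have "\<dots> = (\<Sum>l\<in>{0..<NN}. if l = i then D $$ (k, i) else 0)"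
      by (intro sum.cong refl) (auto simp: E_idx ij)
    also have "\<dots> = D $$ (k, i)" using ij by simp
    finally have 1: "(D * E i j) $$ (k, j) = D $$ (k, i)" .
    have "(E i j * D) $$ (k, j) = (\<Sum>l\<in>{0..<NN}. E i j $$ (k, l) * D $$ (l, j))"
      by (rule mult_idx[OF E_car D k ij(2)])
    also have "\<dots> = (\<Sum>l\<in>{0..<NN}. if l = j then (if k = i then D $$ (j, j) else 0) else 0)"
      by (intro sum.cong refl) (auto simp: E_idx k)
    also have "\<dots> = (if k = i then D $$ (j, j) else 0)" using ij by simp
    finally have 2: "(E i j * D) $$ (k, j) = (if k = i then D $$ (j, j) else 0)" .
    show ?thesis using 1 2 c by simp
  qed
  define a where "a = D $$ (0, 0)"
  define b where "b = D $$ (h, h)"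
  have Dform: "D $$ (k, i) = (if k = i then (if i < h then a else b) else 0)"
    if "k < NN" "i < NN" for k i
  proof (cases "i < h")
    case True
    then show ?thesis using col[of i 0 k] that h1 NN2 unfolding a_def by auto
  next
    case False
    then show ?thesis using col[of i h k] that h1 NN2 unfolding b_def by auto
  qed
  have DD: "D * D = bc ?O ?O \<cdot>\<^sub>m 1\<^sub>m NN"
  proof -
    have "mul (clbas ?O) (clbas ?O) = clsc (bc ?O ?O) cl_one"
      using mult_eb[OF O O] sd_self one_eb by simp
    then show ?thesis unfolding D_def using beta_mult[OF eO eO] beta_scl[OF one_carrier] beta_one by simp
  qed
  have sq: "(D * D) $$ (i, i) = (if i < h then a else b) * (if i < h then a else b)" if i: "i < NN" for i
  proof -
    have "(D * D) $$ (i, i) = (\<Sum>l\<in>{0..<NN}. D $$ (i, l) * D $$ (l, i))"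
      by (rule mult_idx[OF D D i i])
    also have "\<dots> = (\<Sum>l\<in>{0..<NN}. if l = i then (if i < h then a else b) * (if i < h then a else b) else 0)"
      by (intro sum.cong refl) (auto simp: Dform i)
    also have "\<dots> = (if i < h then a else b) * (if i < h then a else b)" using i by simp
    finally show ?thesis .
  qed
  have "a * a = bc ?O ?O" using sq[of 0] DD h1 NN2 by simp
  moreover have "b * b = bc ?O ?O" using sq[of h] DD h1 NN2 by simp
  ultimately have ab: "a * a = b * b" by simp
  have "a \<noteq> b"
  proof
    assume "a = b"
    then have "D = a \<cdot>\<^sub>m 1\<^sub>m NN" using D by (intro eq_matI) (auto simp: Dform)
    also have "\<dots> = \<beta> (clsc a cl_one)" using beta_scl[OF one_carrier] beta_one by simp
    finally have "clbas ?O = clsc a cl_one"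
      unfolding D_def by (rule beta_inj[OF eO scl_carrier[OF one_carrier]])
    then have "clbas ?O ?O = clsc a cl_one ?O" by simp
    moreover have "?O \<noteq> {}" using n1 by auto
    ultimately show False unfolding clbas_def clsc_def cl_one_def by simp
  qed
  with ab have ba: "b = - a"
  proof -
    have "(a - b) * (a + b) = 0" using ab by (simp add: algebra_simps)
    then show ?thesis using \<open>a \<noteq> b\<close> by (simp add: add_eq_0_iff2)
  qed
  have "mtr D = (\<Sum>i\<in>{0..<2*h}. if i < h then a else b)"
    unfolding mtr_def using D NN2 Dform by (auto intro!: sum.cong)
  also have "\<dots> = (\<Sum>i\<in>{0..<h}. if i < h then a else b) + (\<Sum>i\<in>{h..<2*h}. if i < h then a else b)"
    by (rule sum.atLeastLessThan_concat[symmetric]) auto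
  also have "(\<Sum>i\<in>{0..<h}. if i < h then a else b) = of_nat h * a" by simp
  also have "(\<Sum>i\<in>{h..<2*h}. if i < h then a else b) = (\<Sum>i\<in>{h..<2*h}. b)"
    by (intro sum.cong) auto
  also have "\<dots> = of_nat h * b" by simp
  finally show ?thesis unfolding D_def using ba by simp
qed

lemma mtr_basis:
  assumes n1: "p + q \<ge> 1" and A: "A \<subseteq> {1..p+q}" and ne: "A \<noteq> {}"
  shows "mtr (\<beta> (clbas A)) = 0"
proof -
  have fA: "finite A" using A finite_subset by auto
  have cA: "card A \<ge> 1" using fA ne by (simp add: Suc_le_eq card_gt_0_iff)
  have sw: "bc {a} A = (-1) ^ (card A - card ({a} \<inter> A)) * bc A {a}" for a
    using blade_swap[of "{a}" A p] fA by simp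
  show ?thesis
  proof (cases "even (card A)")
    case True
    obtain a where a: "a \<in> A" using ne by auto
    have "card ({a} \<inter> A) = 1" using a by simp
    moreover have "odd (card A - 1)" using True cA by simp
    ultimately have "bc {a} A = - bc A {a}" using sw[of a] by simp
    then show ?thesis using anticomm_trace[OF A _] a A by auto
  next
    case False
    show ?thesis
    proof (cases "\<exists>a\<in>{1..p+q}. a \<notin> A")
      case True
      then obtain a where a: "a \<in> {1..p+q}" "a \<notin> A" by auto
      have "card ({a} \<inter> A) = 0" using a by simp
      then have "bc {a} A = - bc A {a}" using sw[of a] False by simp
      then show ?thesis using anticomm_trace[OF A a(1)] by simp
    next
      case nf: False
      then have AO: "A = {1..p+q}" using A by auto
      then have "odd (p + q)" using False by simp
      then show ?thesis unfolding AO by (rule central_trace[OF n1])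
    qed
  qed
qed

lemma mtr_scalar:
  assumes n1: "p + q \<ge> 1" and X: "X \<in> K"
  shows "mtr (\<beta> X) = of_nat NN * X {}"
proof -
  have E: "{} \<in> PP" by simp
  have "mtr (\<beta> X) = (\<Sum>A\<in>PP. X A * mtr (\<beta> (clbas A)))" by (rule trace_decomp[OF X])
  also have "\<dots> = X {} * mtr (\<beta> (clbas {})) + (\<Sum>A\<in>PP - {{}}. X A * mtr (\<beta> (clbas A)))"
    by (rule sum.remove[OF _ E]) simp
  also have "(\<Sum>A\<in>PP - {{}}. X A * mtr (\<beta> (clbas A))) = 0"
    by (rule sum.neutral) (use mtr_basis[OF n1] in auto)
  also have "mtr (\<beta> (clbas {})) = of_nat NN" unfolding one_eb[symmetric] beta_one by (rule mtr_one)
  finally show ?thesis by simp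
qed

end

context cliso
begin

lemma Mseq_beta:
  assumes n1: "p + q \<ge> 1" and M: "M \<in> K"
  shows "cl_Mseq p q M k \<in> K \<and> \<beta> (cl_Mseq p q M k) = Aseq NN (\<beta> M) k"
proof (induction k)
  case 0
  then show ?case using M by simp
next
  case (Suc k)
  let ?X = "cl_Mseq p q M k"
  define c where "c = of_nat NN / of_nat (Suc k) * cl_scalar ?X"
  have X: "?X \<in> K" and bX: "\<beta> ?X = Aseq NN (\<beta> M) k" using Suc.IH by auto
  let ?Y = "\<lambda>A. ?X A - c * cl_one A"
  have Yeq: "?Y = (\<lambda>A. ?X A + clsc (- c) cl_one A)" unfolding clsc_def by simp
  have c1: "clsc (- c) cl_one \<in> K" by (rule scl_carrier[OF one_carrier])
  have Y: "?Y \<in> K" unfolding Yeq using X c1 unfolding cl_carrier_def by auto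
  have bY: "\<beta> ?Y = \<beta> ?X + (- c) \<cdot>\<^sub>m 1\<^sub>m NN"
    unfolding Yeq using beta_add[OF X c1] beta_scl[OF one_carrier] beta_one by simp
  have cc: "c = mtr (Aseq NN (\<beta> M) k) / of_nat (Suc k)"
    unfolding c_def bX[symmetric] mtr_scalar[OF n1 X] cl_scalar_def by simp
  have Bc: "Aseq NN (\<beta> M) k \<in> carrier_mat NN NN" using bX beta_carrier[OF X] by simp
  have "\<beta> ?Y = Aseq NN (\<beta> M) k - (mtr (Aseq NN (\<beta> M) k) / of_nat (Suc k)) \<cdot>\<^sub>m 1\<^sub>m NN"
    unfolding bY bX cc[symmetric] using Bc by (intro eq_matI) auto
  moreover have "cl_Mseq p q M (Suc k) = mul M ?Y" unfolding c_def by simp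
  ultimately show ?case using beta_mult[OF M Y] mult_carrier by (simp del: of_nat_Suc)
qed

lemma C_eq:
  assumes n1: "p + q \<ge> 1" and M: "M \<in> K" and k: "k \<ge> 1"
  shows "cl_C p q M k = cc NN (\<beta> M) k"
proof -
  have X: "cl_Mseq p q M (k - 1) \<in> K" and bX: "\<beta> (cl_Mseq p q M (k - 1)) = Aseq NN (\<beta> M) (k - 1)"
    using Mseq_beta[OF n1 M] by auto
  show ?thesis unfolding cl_C_def cc_def bX[symmetric] mtr_scalar[OF n1 X] cl_scalar_def by simp
qed

lemma kernel_prop:
  assumes n1: "p + q \<ge> 1" and M: "M \<in> K" and nor: "cl_normal p q M"
    and v: "v \<in> carrier_vec NN" and z: "\<beta> M *\<^sub>v (\<beta> M *\<^sub>v v) = 0\<^sub>v NN"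
  shows "\<beta> M *\<^sub>v v = 0\<^sub>v NN"
proof -
  define A where "A = \<beta> M"
  have A: "A \<in> carrier_mat NN NN" unfolding A_def by (rule beta_carrier[OF M])
  define g where "g i = (if even (p + q) then True else i < NN div 2)" for i
  have Ablk: "A $$ (i, j) = 0" if "i < NN" "j < NN" "g i \<noteq> g j" for i j
  proof -
    have "A \<in> cl_target p q" unfolding A_def by (rule beta_target[OF M])
    then show ?thesis using that unfolding cl_target_def g_def by (auto split: if_splits)
  qed
  define T where "T w = mat NN NN (\<lambda>(i, j). if g i = g j then w $ i else 0)" for w :: "complex vec"
  have Tc: "T w \<in> carrier_mat NN NN" for w unfolding T_def by simp
  have Tt: "T w \<in> cl_target p q" for w
    unfolding cl_target_def T_def g_def by auto
  have AT: "A * T w = T (A *\<^sub>v w)" if w: "w \<in> carrier_vec NN" for w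
  proof (rule eq_matI)
    fix i j assume i: "i < dim_row (T (A *\<^sub>v w))" and j: "j < dim_col (T (A *\<^sub>v w))"
    then have i: "i < NN" and j: "j < NN" unfolding T_def by auto
    have "(A * T w) $$ (i, j) = (\<Sum>l\<in>{0..<NN}. A $$ (i, l) * T w $$ (l, j))"
      by (rule mult_idx[OF A Tc i j])
    also have "\<dots> = (\<Sum>l\<in>{0..<NN}. if g i = g j then A $$ (i, l) * w $ l else 0)"
    proof (intro sum.cong refl)
      fix l assume l: "l \<in> {0..<NN}"
      show "A $$ (i, l) * T w $$ (l, j) = (if g i = g j then A $$ (i, l) * w $ l else 0)"
        using Ablk[OF i, of l] l j unfolding T_def by auto
    qed
    also have "\<dots> = T (A *\<^sub>v w) $$ (i, j)"
    proof (cases "g i = g j")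
      case True
      have "(A *\<^sub>v w) $ i = (\<Sum>l\<in>{0..<NN}. A $$ (i, l) * w $ l)"
        using A w i by (auto simp: scalar_prod_def intro!: sum.cong)
      then show ?thesis using True i j unfolding T_def by simp
    next
      case False
      then show ?thesis using i j unfolding T_def by simp
    qed
    finally show "(A * T w) $$ (i, j) = T (A *\<^sub>v w) $$ (i, j)" .
  qed (use A in \<open>auto simp: T_def\<close>)
  have T0: "T (0\<^sub>v NN) = 0\<^sub>m NN NN" unfolding T_def by (intro eq_matI) auto
  obtain X where X: "X \<in> K" "\<beta> X = T v" using beta_surj[OF Tt] by auto
  have Av: "A *\<^sub>v v \<in> carrier_vec NN" using A v by simp
  have "\<beta> (mul M (mul M X)) = A * (A * T v)"
    unfolding A_def using beta_mult[OF M mult_carrier] beta_mult[OF M X(1)] X(2) by simp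
  also have "\<dots> = T (A *\<^sub>v (A *\<^sub>v v))" using AT[OF v] AT[OF Av] by simp
  also have "\<dots> = \<beta> (\<lambda>A. 0)" using z T0 beta_zero unfolding A_def by simp
  finally have "mul M (mul M X) = (\<lambda>A. 0)" by (rule beta_inj[OF mult_carrier zero_carrier])
  then have "mul M X = (\<lambda>A. 0)" by (rule normal_kernel[OF M nor X(1)])
  then have "T (A *\<^sub>v v) = 0\<^sub>m NN NN"
    using AT[OF v] beta_mult[OF M X(1)] X(2) beta_zero unfolding A_def by simp
  then have "T (A *\<^sub>v v) $$ (i, i) = 0" if "i < NN" for i using that by simp
  then have "(A *\<^sub>v v) $ i = 0" if "i < NN" for i using that unfolding T_def by simp
  then show ?thesis unfolding A_def[symmetric] using Av A by (intro eq_vecI) auto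
qed

end

theorem theorem5:
  fixes p q :: nat and M :: cl and \<beta> :: "cl \<Rightarrow> complex mat"
  assumes "p + q \<ge> 1"
    and "M \<in> cl_carrier p q"
    and "cl_normal p q M"
    and "cl_iso p q \<beta>"
  shows "(cl_C p q M (cl_N p q) \<noteq> 0 \<longrightarrow> cl_rank p q \<beta> M = cl_N p q)
    \<and> (\<forall>k\<in>{2..cl_N p q - 1}.
         (\<forall>j\<in>{k+1..cl_N p q}. cl_C p q M j = 0) \<and> cl_C p q M k \<noteq> 0
           \<longrightarrow> cl_rank p q \<beta> M = k)
    \<and> ((\<forall>j\<in>{2..cl_N p q}. cl_C p q M j = 0) \<and> M \<noteq> (\<lambda>A. 0) \<longrightarrow> cl_rank p q \<beta> M = 1)
    \<and> (M = (\<lambda>A. 0) \<longrightarrow> cl_rank p q \<beta> M = 0)"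
proof -
  note n1 = assms(1) and M = assms(2) and nor = assms(3)
  interpret cliso p q \<beta> by unfold_locales (rule assms(4))
  define A where "A = \<beta> M"
  define r where "r = cl_rank p q \<beta> M"
  have A: "A \<in> carrier_mat NN NN" unfolding A_def by (rule beta_carrier[OF M])
  have NN1: "NN \<ge> 1" unfolding cl_N_def by simp
  have r: "r = vec_space.rank NN A" unfolding r_def cl_rank_def A_def ..
  have KP: "\<And>v. v \<in> carrier_vec NN \<Longrightarrow> A *\<^sub>v (A *\<^sub>v v) = 0\<^sub>v NN \<Longrightarrow> A *\<^sub>v v = 0\<^sub>v NN"
    unfolding A_def by (rule kernel_prop[OF n1 M nor])
  from mat_main[OF A NN1 KP] have H1: "\<And>j. r < j \<Longrightarrow> cc NN A j = 0"
    and H2: "r \<ge> 1 \<Longrightarrow> cc NN A r \<noteq> 0" unfolding r by auto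
  have CE: "\<And>j. j \<ge> 1 \<Longrightarrow> cl_C p q M j = cc NN A j" unfolding A_def by (rule C_eq[OF n1 M])
  have rle: "r \<le> NN" unfolding r by (rule vec_space.rank_le_nc[OF A])
  have c1: "cl_C p q M NN \<noteq> 0 \<longrightarrow> r = NN"
  proof
    assume c: "cl_C p q M NN \<noteq> 0"
    show "r = NN"
    proof (rule ccontr)
      assume "r \<noteq> NN" then have "r < NN" using rle by simp
      then show False using H1 CE[OF NN1] c by simp
    qed
  qed
  have c2: "\<forall>k\<in>{2..NN - 1}. (\<forall>j\<in>{k+1..NN}. cl_C p q M j = 0) \<and> cl_C p q M k \<noteq> 0 \<longrightarrow> r = k"
  proof (intro ballI impI)
    fix k assume k: "k \<in> {2..NN - 1}" and h: "(\<forall>j\<in>{k+1..NN}. cl_C p q M j = 0) \<and> cl_C p q M k \<noteq> 0"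
    show "r = k"
    proof (rule ccontr)
      assume "r \<noteq> k"
      then consider "r < k" | "k < r" by linarith
      then show False
      proof cases
        case 1
        then show False using H1[OF 1] CE[of k] k h by simp
      next
        case 2
        then have "r \<in> {k+1..NN}" "r \<ge> 1" using rle by auto
        then show False using H2 CE[of r] h by auto
      qed
    qed
  qed
  have c3: "(\<forall>j\<in>{2..NN}. cl_C p q M j = 0) \<and> M \<noteq> (\<lambda>A. 0) \<longrightarrow> r = 1"
  proof
    assume h: "(\<forall>j\<in>{2..NN}. cl_C p q M j = 0) \<and> M \<noteq> (\<lambda>A. 0)"
    have "A \<noteq> 0\<^sub>m NN NN"
    proof
      assume "A = 0\<^sub>m NN NN"
      then have "\<beta> M = \<beta> (\<lambda>A. 0)" unfolding A_def using beta_zero by simp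
      then have "M = (\<lambda>A. 0)" by (rule beta_inj[OF M zero_carrier])
      then show False using h by simp
    qed
    then have "r \<ge> 1" unfolding r by (rule rank_pos[OF A])
    show "r = 1"
    proof (rule ccontr)
      assume "r \<noteq> 1"
      then have "r \<in> {2..NN}" using \<open>r \<ge> 1\<close> rle by auto
      then show False using H2 CE[of r] h \<open>r \<ge> 1\<close> by auto
    qed
  qed
  have c4: "M = (\<lambda>A. 0) \<longrightarrow> r = 0"
  proof
    assume "M = (\<lambda>A. 0)"
    then have "A = 0\<^sub>m NN NN" unfolding A_def using beta_zero by simp
    then show "r = 0" unfolding r using vec_space.rank_0I by simp
  qed
  show ?thesis using c1 c2 c3 c4 unfolding r_def by blast
qed

end
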